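(* Consider the IMAB model with $K\ge 2$ arms and finite alphabets $\mathcal{X}_1,\ldots,\mathcal{X}_K$, and run the generic UCB algorithm with the plug-in estimator $\hat H(\boldsymbol Y,n)=H(\hat p(\boldsymbol Y,n))$, the upper confidence deviation $\mathrm{UCD}(\boldsymbol Y,\delta,n)=\log\bigl(1+\frac{|\mathcal{X}_i|-1}{n}\bigr)+\sqrt{\frac{2\log^2(n)}{n}\log(\frac{2}{\delta})}$ for arm $i$, and $\delta_\alpha(t)=t^{-\alpha}$ with $\alpha>2$. Let $\beta\in(0,1)$. Then for every $t\ge1$, \[ R(t)\leq \sum_{i\in[K]:\Delta_i>0}\Bigl[\Gamma_{\mathrm{bias}}(\alpha,\beta,\mathcal{X}_i,\Delta_i,t)\,\Delta_i+\frac{2(\alpha-1)}{\alpha-2}\Delta_i\Bigr], \] where $\Gamma_{\mathrm{bias}}(\alpha,\beta,\mathcal{Y},\Delta,t):=\max\bigl\{\frac{|\mathcal{Y}|-1}{e^{\beta\Delta/2}-1},\,15\Lambda_2\bigl(\frac{8\log(2t^\alpha)}{(1-\beta)^2\Delta^2}\bigr)\bigr\}$.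
   Context: IMAB model: there are $K\ge2$ arms; arm $i$ emits i.i.d. symbols from an unknown PMF $p_i$ on a finite alphabet $\mathcal{X}_i$, independently across rounds and arms. $H_i:=H(p_i)=-\sum_x p_i(x)\log p_i(x)$ (natural log), $i^*\in\arg\max_i H_i$, $\Delta_i:=H_{i^*}-H_i$. Generic UCB algorithm: given an estimator $\hat H(\boldsymbol Y,n)$, an upper confidence deviation $\mathrm{UCD}(\boldsymbol Y,\delta,n)$ and a confidence function $\delta_\alpha(t)$, at each round $t=1,2,\ldots$ the player plays $I(t)\in\arg\max_{i\in[K]}\{\hat H(\boldsymbol X_i(t-1),N_i(t-1))+\mathrm{UCD}(\boldsymbol X_i(t-1),\delta_\alpha(t),N_i(t-1))\}$ (ties broken arbitrarily; an arm whose index is undefined, e.g. with $N_i(t-1)=0$, is treated as having index $+\infty$), where $\boldsymbol X_i(t-1)$ is the tuple of symbols observed from arm $i$ before round $t$ and $N_i(t-1)$ its length; it then observes a fresh symbol from $p_{I(t)}$, appended to $\boldsymbol X_{I(t)}$. $N_i(t)$ is the number of plays of arm $i$ in rounds $1,\ldots,t$. Pseudo-regret: $R(t):=\sum_{i:\Delta_i>0}\mathbb{E}[N_i(t)]\Delta_i$. Plug-in estimator: $\hat p(\boldsymbol Y,n)(y)=\frac1n\sum_{\ell=1}^n\mathbb{1}\{Y_\ell=y\}$ and $\hat H=H(\hat p)$. $\Lambda_k(s):=s\log^k s$. *)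

theory Defs
  imports "HOL-Probability.Probability"
begin

definition shannon_H :: "('a \<Rightarrow> real) \<Rightarrow> 'a set \<Rightarrow> real" where
  "shannon_H f S = - (\<Sum>x\<in>S. f x * ln (f x))"

definition pmf_entropy :: "'a pmf \<Rightarrow> real" where
  "pmf_entropy p = shannon_H (pmf p) (set_pmf p)"

definition emp_pmf :: "'a list \<Rightarrow> 'a \<Rightarrow> real" where
  "emp_pmf Y y = real (count_list Y y) / real (length Y)"

definition plugin_H :: "'a list \<Rightarrow> real" where
  "plugin_H Y = shannon_H (emp_pmf Y) (set Y)"

definition ucd :: "nat \<Rightarrow> 'a list \<Rightarrow> real \<Rightarrow> real" where
  "ucd m Y \<delta> = (let n = real (length Y) in
     ln (1 + (real m - 1) / n) + sqrt (2 * (ln n)\<^sup>2 / n * ln (2 / \<delta>)))"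

definition delta_conf :: "real \<Rightarrow> nat \<Rightarrow> real" where
  "delta_conf \<alpha> t = real t powr (- \<alpha>)"

text \<open>History: list of (arm, observed symbol) pairs in order of play.
  Observations of arm i extracted from a history.\<close>
definition obs :: "(nat \<times> 'a) list \<Rightarrow> nat \<Rightarrow> 'a list" where
  "obs h i = map snd (filter (\<lambda>(j, _). j = i) h)"

definition ucb_index :: "(nat \<Rightarrow> 'a set) \<Rightarrow> real \<Rightarrow> nat \<Rightarrow> (nat \<times> 'a) list \<Rightarrow> nat \<Rightarrow> ereal" where
  "ucb_index X \<alpha> t h i = (if obs h i = [] then \<infinity>
     else ereal (plugin_H (obs h i) + ucd (card (X i)) (obs h i) (delta_conf \<alpha> t)))"

definition ucb_argmax :: "nat \<Rightarrow> (nat \<Rightarrow> 'a set) \<Rightarrow> real \<Rightarrow> nat \<Rightarrow> (nat \<times> 'a) list \<Rightarrow> nat set" where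
  "ucb_argmax K X \<alpha> t h = {i. i < K \<and> (\<forall>j<K. ucb_index X \<alpha> t h j \<le> ucb_index X \<alpha> t h i)}"

text \<open>Run of the algorithm with tie-breaking/choice rule ch (ch t h = arm played in round t
  given history h of rounds 1..t-1), on the reward table \<omega>: the k-th play (k from 0)
  of arm i reveals \<omega> (i, k).\<close>
fun run :: "(nat \<Rightarrow> (nat \<times> 'a) list \<Rightarrow> nat) \<Rightarrow> (nat \<times> nat \<Rightarrow> 'a) \<Rightarrow> nat \<Rightarrow> (nat \<times> 'a) list" where
  "run ch \<omega> 0 = []"
| "run ch \<omega> (Suc t) = (let h = run ch \<omega> t; a = ch (Suc t) h in h @ [(a, \<omega> (a, length (obs h a)))])"

definition plays :: "(nat \<Rightarrow> (nat \<times> 'a) list \<Rightarrow> nat) \<Rightarrow> (nat \<times> nat \<Rightarrow> 'a) \<Rightarrow> nat \<Rightarrow> nat \<Rightarrow> nat" where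
  "plays ch \<omega> t i = length (obs (run ch \<omega> t) i)"

definition imab_space :: "(nat \<Rightarrow> 'a pmf) \<Rightarrow> (nat \<times> nat \<Rightarrow> 'a) measure" where
  "imab_space p = PiM UNIV (\<lambda>(i, k). measure_pmf (p i))"

definition max_entropy :: "nat \<Rightarrow> (nat \<Rightarrow> 'a pmf) \<Rightarrow> real" where
  "max_entropy K p = Max ((\<lambda>i. pmf_entropy (p i)) ` {..<K})"

definition gap :: "nat \<Rightarrow> (nat \<Rightarrow> 'a pmf) \<Rightarrow> nat \<Rightarrow> real" where
  "gap K p i = max_entropy K p - pmf_entropy (p i)"

definition pseudo_regret :: "nat \<Rightarrow> (nat \<Rightarrow> 'a pmf) \<Rightarrow> (nat \<Rightarrow> (nat \<times> 'a) list \<Rightarrow> nat) \<Rightarrow> nat \<Rightarrow> real" where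
  "pseudo_regret K p ch t =
     (\<Sum>i\<in>{i. i < K \<and> gap K p i > 0}.
        (\<integral>\<omega>. real (plays ch \<omega> t i) \<partial>imab_space p) * gap K p i)"

definition Lambda :: "nat \<Rightarrow> real \<Rightarrow> real" where
  "Lambda k s = s * (ln s) ^ k"

definition Gamma_bias :: "real \<Rightarrow> real \<Rightarrow> 'a set \<Rightarrow> real \<Rightarrow> nat \<Rightarrow> real" where
  "Gamma_bias \<alpha> \<beta> Y \<Delta> t = max ((real (card Y) - 1) / (exp (\<beta> * \<Delta> / 2) - 1))
     (15 * Lambda 2 (8 * ln (2 * real t powr \<alpha>) / ((1 - \<beta>)\<^sup>2 * \<Delta>\<^sup>2)))"

end

theory Submission
  imports Defs
begin


fun iid :: "'a pmf \<Rightarrow> nat \<Rightarrow> 'a list pmf" where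
  "iid p 0 = return_pmf []"
| "iid p (Suc n) = bind_pmf p (\<lambda>x. map_pmf (\<lambda>xs. x # xs) (iid p n))"

lemma set_iid: "set_pmf (iid p n) = {xs. length xs = n \<and> set xs \<subseteq> set_pmf p}"
proof (induction n)
  case 0 then show ?case by auto
next
  case (Suc n)
  show ?case
  proof (rule set_eqI, rule iffI)
    fix xs assume "xs \<in> set_pmf (iid p (Suc n))"
    then show "xs \<in> {xs. length xs = Suc n \<and> set xs \<subseteq> set_pmf p}" using Suc by auto
  next
    fix xs assume "xs \<in> {xs. length xs = Suc n \<and> set xs \<subseteq> set_pmf p}"
    then obtain y ys where "xs = y # ys" "length ys = n" "y \<in> set_pmf p" "set ys \<subseteq> set_pmf p"
      by (cases xs) auto
    then show "xs \<in> set_pmf (iid p (Suc n))" using Suc by auto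
  qed
qed

lemma finite_set_iid: "finite (set_pmf p) \<Longrightarrow> finite (set_pmf (iid p n))"
  unfolding set_iid using finite_lists_length_eq[of "set_pmf p" n] by (simp add: conj_commute)

lemma E_iid_Suc:
  fixes F :: "'a list \<Rightarrow> real"
  assumes "finite (set_pmf p)"
  shows "measure_pmf.expectation (iid p (Suc n)) F =
         measure_pmf.expectation p (\<lambda>x. measure_pmf.expectation (iid p n) (\<lambda>xs. F (x # xs)))"
proof -
  have "measure_pmf.expectation (iid p (Suc n)) F =
     (\<Sum>a\<in>set_pmf p. pmf p a *\<^sub>R measure_pmf.expectation (map_pmf ((#) a) (iid p n)) F)"
    by (simp only: iid.simps, rule pmf_expectation_bind) (auto simp: assms finite_set_iid)
  also have "\<dots> = measure_pmf.expectation p (\<lambda>x. measure_pmf.expectation (iid p n) (\<lambda>xs. F (x # xs)))"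
    by (subst integral_measure_pmf[OF assms]) auto
  finally show ?thesis .
qed

lemma pmf_iid: "pmf (iid p n) xs = (if length xs = n then (\<Prod>x\<leftarrow>xs. pmf p x) else 0)"
proof (induction n arbitrary: xs)
  case 0 then show ?case by (cases xs) (auto simp: pmf_return)
next
  case (Suc n)
  show ?case
  proof (cases xs)
    case Nil
    then have "xs \<notin> set_pmf (iid p (Suc n))" by (simp only: set_iid) simp
    then show ?thesis using Nil by (simp add: set_pmf_eq)
  next
    case (Cons y ys)
    have "pmf (iid p (Suc n)) xs = (\<integral>x. pmf (map_pmf ((#) x) (iid p n)) (y # ys) \<partial>measure_pmf p)"
      by (simp add: pmf_bind Cons)
    also have "\<dots> = (\<integral>x. indicator {y} x * pmf (iid p n) ys \<partial>measure_pmf p)"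
    proof (rule Bochner_Integration.integral_cong[OF refl])
      fix x
      show "pmf (map_pmf ((#) x) (iid p n)) (y # ys) = indicator {y} x * pmf (iid p n) ys"
      proof (cases "x = y")
        case True then show ?thesis by (simp add: pmf_map_inj' inj_on_def)
      next
        case False
        then have "y # ys \<notin> set_pmf (map_pmf ((#) x) (iid p n))" by auto
        then show ?thesis using False by (simp add: set_pmf_eq)
      qed
    qed
    also have "\<dots> = pmf p y * pmf (iid p n) ys"
      by (simp add: measure_pmf.emeasure_eq_measure pmf.rep_eq)
    finally show ?thesis using Suc Cons by auto
  qed
qed



definition BD :: "nat \<Rightarrow> real \<Rightarrow> ('a list \<Rightarrow> real) \<Rightarrow> bool" where
  "BD n c f \<longleftrightarrow> (\<forall>xs i b. length xs = n \<longrightarrow> i < n \<longrightarrow> \<bar>f (xs[i:=b]) - f xs\<bar> \<le> c)"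

lemma E_le_const:
  fixes h :: "'b \<Rightarrow> real"
  assumes "finite (set_pmf q)" "\<And>x. x \<in> set_pmf q \<Longrightarrow> h x \<le> c"
  shows "measure_pmf.expectation q h \<le> c"
  by (rule measure_pmf.integral_le_const)
     (auto simp: assms integrable_measure_pmf_finite AE_measure_pmf_iff)

lemma E_ge_const:
  fixes h :: "'b \<Rightarrow> real"
  assumes "finite (set_pmf q)" "\<And>x. x \<in> set_pmf q \<Longrightarrow> c \<le> h x"
  shows "c \<le> measure_pmf.expectation q h"
  by (rule measure_pmf.integral_ge_const)
     (auto simp: assms integrable_measure_pmf_finite AE_measure_pmf_iff)

lemma E_mono:
  fixes h g :: "'b \<Rightarrow> real"
  assumes "finite (set_pmf q)" "\<And>x. x \<in> set_pmf q \<Longrightarrow> h x \<le> g x"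
  shows "measure_pmf.expectation q h \<le> measure_pmf.expectation q g"
  by (rule integral_mono_AE)
     (auto simp: assms integrable_measure_pmf_finite AE_measure_pmf_iff)

lemma hoeffding_pmf:
  fixes g :: "'b \<Rightarrow> real"
  assumes fin: "finite (set_pmf q)" and l: "l > 0"
    and bd: "\<And>x y. x \<in> set_pmf q \<Longrightarrow> y \<in> set_pmf q \<Longrightarrow> \<bar>g x - g y\<bar> \<le> c"
  shows "measure_pmf.expectation q (\<lambda>x. exp (l * (g x - measure_pmf.expectation q g)))
           \<le> exp (l\<^sup>2 * c\<^sup>2 / 8)"
proof -
  define S where "S = set_pmf q"
  have S: "finite S" "S \<noteq> {}" using fin by (auto simp: S_def set_pmf_not_empty)
  define a where "a = Min (g ` S)"
  define b where "b = Max (g ` S)"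
  have ab: "\<And>x. x \<in> S \<Longrightarrow> g x \<in> {a..b}" using S by (auto simp: a_def b_def)
  have "a \<in> g ` S" unfolding a_def using S by (intro Min_in) auto
  then obtain xa where xa: "xa \<in> S" "g xa = a" by auto
  have "b \<in> g ` S" unfolding b_def using S by (intro Max_in) auto
  then obtain xb where xb: "xb \<in> S" "g xb = b" by auto
  have "b - a \<le> c" using bd[of xb xa] xa xb by (auto simp: S_def)
  moreover have "0 \<le> b - a" using ab[OF xa(1)] by auto
  ultimately have bac: "(b - a)\<^sup>2 \<le> c\<^sup>2"
    by (intro power_mono) auto
  have ab1: "\<And>x. x \<in> set_pmf q \<Longrightarrow> a \<le> g x" using ab by (simp add: S_def)
  have ab2: "\<And>x. x \<in> set_pmf q \<Longrightarrow> g x \<le> b" using ab by (simp add: S_def)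
  interpret I: interval_bounded_random_variable "measure_pmf q" g a b
    by unfold_locales (auto simp: AE_measure_pmf_iff intro: ab1 ab2)
  have "ennreal (measure_pmf.expectation q (\<lambda>x. exp (l * (g x - measure_pmf.expectation q g))))
       = (\<integral>\<^sup>+x. exp (l * (g x - measure_pmf.expectation q g)) \<partial>measure_pmf q)"
    by (rule nn_integral_eq_integral[symmetric]) (auto simp: fin integrable_measure_pmf_finite)
  also have "\<dots> \<le> ennreal (exp (l\<^sup>2 * (b - a)\<^sup>2 / 8))"
    by (rule I.Hoeffdings_lemma_nn_integral[OF l])
  finally have "measure_pmf.expectation q (\<lambda>x. exp (l * (g x - measure_pmf.expectation q g)))
      \<le> exp (l\<^sup>2 * (b - a)\<^sup>2 / 8)"
    by (simp add: ennreal_le_iff)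
  also have "\<dots> \<le> exp (l\<^sup>2 * c\<^sup>2 / 8)"
    using bac by (intro exp_mono divide_right_mono mult_left_mono) auto
  finally show ?thesis .
qed

lemma BD_Cons:
  assumes "BD (Suc n) c f"
  shows "BD n c (\<lambda>xs. f (x # xs))"
  unfolding BD_def
proof (intro allI impI)
  fix xs :: "'a list" and i b assume "length xs = n" "i < n"
  then have "\<bar>f ((x # xs)[Suc i := b]) - f (x # xs)\<bar> \<le> c"
    using assms unfolding BD_def by (intro assms[unfolded BD_def, rule_format]) auto
  then show "\<bar>f (x # xs[i := b]) - f (x # xs)\<bar> \<le> c" by simp
qed

lemma BD_head:
  assumes "BD (Suc n) c f" "length xs = n"
  shows "\<bar>f (y # xs) - f (x # xs)\<bar> \<le> c"
proof -
  have "\<bar>f ((x # xs)[0 := y]) - f (x # xs)\<bar> \<le> c"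
    using assms by (intro assms(1)[unfolded BD_def, rule_format]) auto
  then show ?thesis by simp
qed

lemma mcdiarmid_mgf:
  fixes f :: "'a list \<Rightarrow> real"
  assumes fin: "finite (set_pmf p)" and l: "l > 0"
  shows "BD n c f \<Longrightarrow> measure_pmf.expectation (iid p n)
            (\<lambda>xs. exp (l * (f xs - measure_pmf.expectation (iid p n) f))) \<le> exp (l\<^sup>2 * n * c\<^sup>2 / 8)"
proof (induction n arbitrary: f)
  case 0
  then show ?case by simp
next
  case (Suc n)
  define g where "g x = measure_pmf.expectation (iid p n) (\<lambda>xs. f (x # xs))" for x
  define Ef where "Ef = measure_pmf.expectation (iid p (Suc n)) f"
  have Ef: "Ef = measure_pmf.expectation p g"
    unfolding Ef_def g_def by (rule E_iid_Suc[OF fin])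
  have fin2: "finite (set_pmf (iid p n))" by (rule finite_set_iid[OF fin])
  have inner: "measure_pmf.expectation (iid p n) (\<lambda>xs. exp (l * (f (x # xs) - Ef)))
     \<le> exp (l * (g x - Ef)) * exp (l\<^sup>2 * n * c\<^sup>2 / 8)" for x
  proof -
    have IH: "measure_pmf.expectation (iid p n) (\<lambda>xs. exp (l * (f (x # xs) - g x)))
        \<le> exp (l\<^sup>2 * n * c\<^sup>2 / 8)"
      using Suc.IH[OF BD_Cons[OF Suc.prems]] unfolding g_def .
    have "measure_pmf.expectation (iid p n) (\<lambda>xs. exp (l * (f (x # xs) - Ef)))
       = measure_pmf.expectation (iid p n) (\<lambda>xs. exp (l * (g x - Ef)) * exp (l * (f (x # xs) - g x)))"
      by (rule Bochner_Integration.integral_cong) (auto simp: algebra_simps simp flip: exp_add)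
    also have "\<dots> = exp (l * (g x - Ef)) * measure_pmf.expectation (iid p n) (\<lambda>xs. exp (l * (f (x # xs) - g x)))"
      by simp
    also have "\<dots> \<le> exp (l * (g x - Ef)) * exp (l\<^sup>2 * n * c\<^sup>2 / 8)"
      using IH by (intro mult_left_mono) auto
    finally show ?thesis .
  qed
  have gbd: "\<bar>g x - g y\<bar> \<le> c" for x y
  proof -
    have "g x - g y = measure_pmf.expectation (iid p n) (\<lambda>xs. f (x # xs) - f (y # xs))"
      unfolding g_def by (simp add: fin2 integrable_measure_pmf_finite)
    moreover have "\<bar>f (x # xs) - f (y # xs)\<bar> \<le> c" if "xs \<in> set_pmf (iid p n)" for xs
      using BD_head[OF Suc.prems, of xs x y] that by (simp add: set_iid abs_minus_commute)
    moreover have "measure_pmf.expectation (iid p n) (\<lambda>xs. f (x # xs) - f (y # xs)) \<le> c"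
      using calculation(2) by (intro E_le_const[OF fin2]) (auto simp: abs_le_iff)
    moreover have "-c \<le> measure_pmf.expectation (iid p n) (\<lambda>xs. f (x # xs) - f (y # xs))"
      using calculation(2) by (intro E_ge_const[OF fin2]) (force simp: abs_le_iff)
    ultimately show ?thesis by (simp add: abs_le_iff)
  qed
  have "measure_pmf.expectation (iid p (Suc n)) (\<lambda>xs. exp (l * (f xs - Ef)))
      = measure_pmf.expectation p (\<lambda>x. measure_pmf.expectation (iid p n) (\<lambda>xs. exp (l * (f (x # xs) - Ef))))"
    by (rule E_iid_Suc[OF fin])
  also have "\<dots> \<le> measure_pmf.expectation p (\<lambda>x. exp (l * (g x - Ef)) * exp (l\<^sup>2 * n * c\<^sup>2 / 8))"
    by (rule E_mono[OF fin inner])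
  also have "\<dots> = measure_pmf.expectation p (\<lambda>x. exp (l * (g x - Ef))) * exp (l\<^sup>2 * n * c\<^sup>2 / 8)"
    by simp
  also have "\<dots> \<le> exp (l\<^sup>2 * c\<^sup>2 / 8) * exp (l\<^sup>2 * n * c\<^sup>2 / 8)"
    unfolding Ef using hoeffding_pmf[OF fin l gbd] by (intro mult_right_mono) auto
  also have "\<dots> = exp (l\<^sup>2 * real (Suc n) * c\<^sup>2 / 8)"
    by (simp add: algebra_simps add_divide_distrib flip: exp_add)
  finally show ?case unfolding Ef_def .
qed

lemma mcdiarmid:
  fixes f :: "'a list \<Rightarrow> real"
  assumes fin: "finite (set_pmf p)" and bd: "BD n c f" and c: "c > 0" and n: "n > 0" and e: "\<epsilon> > 0"
  shows "measure_pmf.prob (iid p n) {xs. f xs - measure_pmf.expectation (iid p n) f \<ge> \<epsilon>}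
           \<le> exp (- 2 * \<epsilon>\<^sup>2 / (n * c\<^sup>2))"
proof -
  define Ef where "Ef = measure_pmf.expectation (iid p n) f"
  define l where "l = 4 * \<epsilon> / (n * c\<^sup>2)"
  have l: "l > 0" using c n e by (simp add: l_def)
  have fin2: "finite (set_pmf (iid p n))" by (rule finite_set_iid[OF fin])
  have "measure_pmf.prob (iid p n) {xs. f xs - Ef \<ge> \<epsilon>}
      = measure_pmf.expectation (iid p n) (indicator {xs. f xs - Ef \<ge> \<epsilon>})"
    by simp
  also have "\<dots> \<le> measure_pmf.expectation (iid p n) (\<lambda>xs. exp (- l * \<epsilon>) * exp (l * (f xs - Ef)))"
  proof (rule E_mono[OF fin2])
    fix xs
    show "indicator {xs. f xs - Ef \<ge> \<epsilon>} xs \<le> exp (- l * \<epsilon>) * exp (l * (f xs - Ef))"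
    proof (cases "f xs - Ef \<ge> \<epsilon>")
      case True
      then have "l * \<epsilon> \<le> l * (f xs - Ef)" using l by (intro mult_left_mono) auto
      then have "0 \<le> - l * \<epsilon> + l * (f xs - Ef)" by simp
      then have "1 \<le> exp (- l * \<epsilon> + l * (f xs - Ef))" by simp
      then show ?thesis using True by (simp add: exp_add[symmetric])
    qed auto
  qed
  also have "\<dots> = exp (- l * \<epsilon>) * measure_pmf.expectation (iid p n) (\<lambda>xs. exp (l * (f xs - Ef)))"
    by simp
  also have "\<dots> \<le> exp (- l * \<epsilon>) * exp (l\<^sup>2 * n * c\<^sup>2 / 8)"
    using mcdiarmid_mgf[OF fin l bd] unfolding Ef_def by (intro mult_left_mono) auto
  also have "\<dots> = exp (- 2 * \<epsilon>\<^sup>2 / (n * c\<^sup>2))"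
  proof -
    have "- l * \<epsilon> + l\<^sup>2 * n * c\<^sup>2 / 8 = - 2 * \<epsilon>\<^sup>2 / (n * c\<^sup>2)"
      using c n by (simp add: l_def field_simps power2_eq_square)
    then show ?thesis by (simp flip: exp_add)
  qed
  finally show ?thesis unfolding Ef_def .
qed



definition phi :: "nat \<Rightarrow> real" where "phi k = real k * ln (real k)"

lemma plugin_H_ext:
  assumes "finite U" "set xs \<subseteq> U"
  shows "plugin_H xs = - (\<Sum>y\<in>U. emp_pmf xs y * ln (emp_pmf xs y))"
  unfolding plugin_H_def shannon_H_def
  using assms by (intro arg_cong[where f=uminus] sum.mono_neutral_left)
    (auto simp: emp_pmf_def count_list_0_iff)

lemma plugin_H_repr:
  assumes "finite U" "set xs \<subseteq> U" "xs \<noteq> []"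
  shows "plugin_H xs = ln (length xs) - (\<Sum>y\<in>U. phi (count_list xs y)) / length xs"
proof -
  define n where "n = real (length xs)"
  have n: "n > 0" using assms by (simp add: n_def)
  have tm: "emp_pmf xs y * ln (emp_pmf xs y) = phi (count_list xs y) / n - real (count_list xs y) / n * ln n" for y
  proof (cases "count_list xs y = 0")
    case True then show ?thesis by (simp add: emp_pmf_def phi_def)
  next
    case False
    then have "real (count_list xs y) > 0" by simp
    then show ?thesis using n
      by (simp add: emp_pmf_def phi_def ln_div n_def[symmetric] field_simps)
  qed
  have sc: "(\<Sum>y\<in>U. real (count_list xs y)) = n"
    using sum_count_set[OF assms(2,1)] unfolding n_def by (metis of_nat_sum)
  have "plugin_H xs = - (\<Sum>y\<in>U. phi (count_list xs y) / n - real (count_list xs y) / n * ln n)"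
    by (simp only: plugin_H_ext[OF assms(1,2)] tm)
  also have "\<dots> = - ((\<Sum>y\<in>U. phi (count_list xs y)) / n - (\<Sum>y\<in>U. real (count_list xs y)) / n * ln n)"
    by (simp add: sum_subtractf sum_divide_distrib sum_distrib_right)
  also have "\<dots> = ln n - (\<Sum>y\<in>U. phi (count_list xs y)) / n"
    using n by (simp add: sc)
  finally show ?thesis by (simp add: n_def)
qed

lemma count_list_update:
  "i < length xs \<Longrightarrow> count_list (xs[i:=b]) y =
     count_list xs y - (if xs ! i = y then 1 else 0) + (if b = y then 1 else 0)"
proof (induction xs arbitrary: i)
  case Nil then show ?case by simp
next
  case (Cons x xs)
  show ?case
  proof (cases i)
    case 0 then show ?thesis by auto
  next
    case (Suc j)
    then have "j < length xs" using Cons by simp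
    have "xs ! j \<in> set xs" using \<open>j < length xs\<close> by simp
    then have c1: "count_list xs (xs ! j) \<noteq> 0" by (simp add: count_list_0_iff)
    from Cons.IH[OF \<open>j < length xs\<close>] show ?thesis using Suc c1 by auto
  qed
qed

definition G :: "nat \<Rightarrow> real" where "G k = phi k - phi (k - 1)"

lemma G_nonneg: "1 \<le> k \<Longrightarrow> 0 \<le> G k"
proof -
  assume k: "1 \<le> k"
  show ?thesis
  proof (cases "k = 1")
    case True then show ?thesis by (simp add: G_def phi_def)
  next
    case False
    then have k2: "2 \<le> k" using k by simp
    then have "real (k - 1) \<ge> 1" by simp
    then have "ln (real (k - 1)) \<ge> 0" "ln (real (k-1)) \<le> ln (real k)" by auto
    then have "real (k - 1) * ln (real (k - 1)) \<le> real k * ln (real k)"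
      using k2 by (intro mult_mono) auto
    then show ?thesis by (simp add: G_def phi_def)
  qed
qed

lemma ln3_ge1: "1 \<le> ln (3::real)"
  using exp_le by (subst ln_ge_iff) auto

lemma G_upper: "1 \<le> k \<Longrightarrow> k \<le> n \<Longrightarrow> 2 \<le> n \<Longrightarrow> G k \<le> 2 * ln (real n)"
proof -
  assume k: "1 \<le> k" and kn: "k \<le> n" and n: "2 \<le> n"
  have lnk: "ln (real k) \<le> ln (real n)" using k kn by simp
  consider "k = 1" | "k = 2" | "3 \<le> k" using k by linarith
  then show ?thesis
  proof cases
    case 1 then show ?thesis using n by (simp add: G_def phi_def)
  next
    case 2 then show ?thesis using lnk by (simp add: G_def phi_def)
  next
    case 3
    have km1: "real (k - 1) > 0" using 3 by simp
    have "ln (real k) - ln (real (k - 1)) = ln (real k / real (k - 1))"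
      using km1 3 by (simp add: ln_div)
    also have "\<dots> \<le> real k / real (k - 1) - 1"
      using km1 3 by (intro ln_le_minus_one) auto
    also have "\<dots> = 1 / real (k - 1)" using km1 3 by (simp add: field_simps of_nat_diff)
    finally have "real (k - 1) * (ln (real k) - ln (real (k - 1))) \<le> 1"
      using km1 by (simp add: field_simps)
    then have "G k \<le> ln (real k) + 1"
      using 3 by (simp add: G_def phi_def algebra_simps of_nat_diff)
    also have "\<dots> \<le> ln (real n) + ln 3" using lnk ln3_ge1 by simp
    also have "ln (3::real) \<le> ln (real n)" using 3 kn by simp
    finally show ?thesis by simp
  qed
qed

lemma count_two_le:
  assumes "a \<noteq> b"
  shows "count_list xs a + count_list xs b \<le> length xs"
proof -
  have "sum (count_list xs) {a, b} \<le> sum (count_list xs) (insert a (insert b (set xs)))"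
    by (intro sum_mono2) auto
  also have "\<dots> = length xs" by (intro sum_count_set) auto
  finally show ?thesis using assms by simp
qed

lemma BD_plugin_H:
  assumes n: "2 \<le> n"
  shows "BD n (2 * ln (real n) / real n) plugin_H"
  unfolding BD_def
proof (intro allI impI)
  fix xs :: "'a list" and i b
  assume len: "length xs = n" and i: "i < n"
  define a where "a = xs ! i"
  have npos: "real n > 0" using n by simp
  have c0: "0 \<le> 2 * ln (real n) / real n" using n by simp
  show "\<bar>plugin_H (xs[i := b]) - plugin_H xs\<bar> \<le> 2 * ln (real n) / real n"
  proof (cases "a = b")
    case True
    then have "xs[i := b] = xs" unfolding a_def by (metis list_update_id)
    then show ?thesis using c0 by simp
  next
    case False
    define U where "U = insert b (set xs)"
    have U: "finite U" "set xs \<subseteq> U" "set (xs[i:=b]) \<subseteq> U"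
      using set_update_subset_insert[of xs i b] by (auto simp: U_def)
    have ne: "xs \<noteq> []" "xs[i:=b] \<noteq> []" using len i by auto
    have aU: "a \<in> U" "b \<in> U" using i len by (auto simp: U_def a_def)
    have cnt: "count_list (xs[i:=b]) y = count_list xs y - (if a = y then 1 else 0) + (if b = y then 1 else 0)" for y
      using count_list_update[of i xs b y] i len by (simp add: a_def)
    define h where "h y = phi (count_list xs y) - phi (count_list (xs[i:=b]) y)" for y
    have "(\<Sum>y\<in>U. h y) = (\<Sum>y\<in>{a,b}. h y)"
      using aU U by (intro sum.mono_neutral_right) (auto simp: h_def cnt)
    also have "\<dots> = h a + h b" using False by simp
    also have "\<dots> = G (count_list xs a) - G (count_list xs b + 1)"
      using False by (simp add: h_def cnt G_def)
    finally have hs: "(\<Sum>y\<in>U. h y) = G (count_list xs a) - G (count_list xs b + 1)" .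
    have ca: "1 \<le> count_list xs a" using i len
      by (metis a_def count_list_0_iff less_one not_less nth_mem)
    have cab: "count_list xs a + count_list xs b \<le> n" using count_two_le[OF False, of xs] len by simp
    have g1: "0 \<le> G (count_list xs a)" "G (count_list xs a) \<le> 2 * ln (real n)"
      using ca cab n by (auto intro: G_nonneg G_upper)
    have g2: "0 \<le> G (count_list xs b + 1)" "G (count_list xs b + 1) \<le> 2 * ln (real n)"
      using ca cab n by (auto intro: G_nonneg G_upper)
    have "plugin_H (xs[i := b]) - plugin_H xs = (\<Sum>y\<in>U. h y) / real n"
      using plugin_H_repr[OF U(1) U(3) ne(2)] plugin_H_repr[OF U(1) U(2) ne(1)] len
      by (simp add: h_def sum_subtractf diff_divide_distrib)
    then have "\<bar>plugin_H (xs[i := b]) - plugin_H xs\<bar> = \<bar>G (count_list xs a) - G (count_list xs b + 1)\<bar> / real n"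
      using hs npos by simp
    also have "\<dots> \<le> 2 * ln (real n) / real n"
      using g1 g2 npos by (intro divide_right_mono) auto
    finally show ?thesis .
  qed
qed

lemma BD_uminus: "BD n c f \<Longrightarrow> BD n c (\<lambda>xs. - f xs)"
  unfolding BD_def by (metis abs_minus_commute minus_diff_eq minus_diff_minus)



lemma E_ind:
  assumes "finite (set_pmf p)"
  shows "measure_pmf.expectation p (\<lambda>x. if x = y then 1 else (0::real)) = pmf p y"
proof -
  have "measure_pmf.expectation p (\<lambda>x. if x = y then 1 else (0::real))
      = (\<Sum>a\<in>set_pmf p. pmf p a *\<^sub>R (if a = y then 1 else (0::real)))"
    by (rule integral_measure_pmf[OF assms]) auto
  also have "\<dots> = (\<Sum>a\<in>set_pmf p. if a = y then pmf p a else 0)"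
    by (intro sum.cong) auto
  also have "\<dots> = pmf p y"
    using assms by (simp add: sum.delta pmf_eq_0_set_pmf)
  finally show ?thesis .
qed

lemma E_count:
  assumes fin: "finite (set_pmf p)"
  shows "measure_pmf.expectation (iid p n) (\<lambda>xs. real (count_list xs y)) = n * pmf p y"
proof (induction n)
  case 0 then show ?case by simp
next
  case (Suc n)
  have fin2: "finite (set_pmf (iid p n))" by (rule finite_set_iid[OF fin])
  have "measure_pmf.expectation (iid p (Suc n)) (\<lambda>xs. real (count_list xs y))
      = measure_pmf.expectation p (\<lambda>x. measure_pmf.expectation (iid p n)
           (\<lambda>xs. (if x = y then 1 else 0) + real (count_list xs y)))"
  proof -
    have eq1: "real (count_list (x # xs) y) = (if x = y then 1 else 0) + real (count_list xs y)" for x xs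
      by simp
    show ?thesis by (subst E_iid_Suc[OF fin]) (simp only: eq1)
  qed
  also have "\<dots> = measure_pmf.expectation p (\<lambda>x. (if x = y then 1 else 0) + n * pmf p y)"
    by (simp add: Suc fin2 integrable_measure_pmf_finite)
  also have "\<dots> = pmf p y + n * pmf p y"
    by (simp add: fin integrable_measure_pmf_finite E_ind)
  finally show ?case by (simp add: algebra_simps)
qed

lemma E_count2:
  assumes fin: "finite (set_pmf p)"
  shows "measure_pmf.expectation (iid p n) (\<lambda>xs. (real (count_list xs y))\<^sup>2)
           = n * pmf p y * (1 - pmf p y) + (real n)\<^sup>2 * (pmf p y)\<^sup>2"
proof (induction n)
  case 0 then show ?case by simp
next
  case (Suc n)
  have fin2: "finite (set_pmf (iid p n))" by (rule finite_set_iid[OF fin])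
  have eq: "(real (count_list (x # xs) y))\<^sup>2 = (if x = y then 1 else 0) +
       (if x = y then 2 else 0) * real (count_list xs y) + (real (count_list xs y))\<^sup>2" for x xs
    by (simp add: power2_eq_square algebra_simps)
  have "measure_pmf.expectation (iid p (Suc n)) (\<lambda>xs. (real (count_list xs y))\<^sup>2)
      = measure_pmf.expectation p (\<lambda>x. measure_pmf.expectation (iid p n)
           (\<lambda>xs. (if x = y then 1 else 0) +
       (if x = y then 2 else 0) * real (count_list xs y) + (real (count_list xs y))\<^sup>2))"
    by (subst E_iid_Suc[OF fin]) (simp only: eq)
  also have "\<dots> = measure_pmf.expectation p (\<lambda>x. (if x = y then 1 else 0) +
       (if x = y then 2 else 0) * (n * pmf p y) + (n * pmf p y * (1 - pmf p y) + (real n)\<^sup>2 * (pmf p y)\<^sup>2))"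
    by (simp add: Suc fin2 integrable_measure_pmf_finite E_count[OF fin])
  also have "\<dots> = measure_pmf.expectation p (\<lambda>x. (1 + 2 * (n * pmf p y)) * (if x = y then 1 else 0) +
       (n * pmf p y * (1 - pmf p y) + (real n)\<^sup>2 * (pmf p y)\<^sup>2))"
    by (rule Bochner_Integration.integral_cong) auto
  also have "\<dots> = (1 + 2 * (n * pmf p y)) * pmf p y + (n * pmf p y * (1 - pmf p y) + (real n)\<^sup>2 * (pmf p y)\<^sup>2)"
    by (simp add: fin integrable_measure_pmf_finite E_ind)
  finally show ?case by (simp add: algebra_simps power2_eq_square)
qed

lemma sum_emp:
  assumes "finite U" "set xs \<subseteq> U" "xs \<noteq> []"
  shows "(\<Sum>y\<in>U. emp_pmf xs y) = 1"
proof -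
  have "(\<Sum>y\<in>U. emp_pmf xs y) = (\<Sum>y\<in>U. real (count_list xs y)) / length xs"
    by (simp add: emp_pmf_def sum_divide_distrib)
  also have "(\<Sum>y\<in>U. real (count_list xs y)) = length xs"
    using sum_count_set[OF assms(2,1)] by (metis of_nat_sum)
  finally show ?thesis using assms by simp
qed

lemma pmf_pos: "y \<in> set_pmf p \<Longrightarrow> pmf p y > 0"
  by (simp add: pmf_positive)

lemma Hhat_upper:
  assumes fin: "finite (set_pmf p)" and xs: "set xs \<subseteq> set_pmf p" "xs \<noteq> []"
  shows "plugin_H xs \<le> - (\<Sum>y\<in>set_pmf p. emp_pmf xs y * ln (pmf p y))"
proof -
  let ?S = "set_pmf p"
  have tm: "emp_pmf xs y * ln (pmf p y) - emp_pmf xs y * ln (emp_pmf xs y) \<le> pmf p y - emp_pmf xs y"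
    if y: "y \<in> ?S" for y
  proof -
    have pp: "pmf p y > 0" using y by (rule pmf_pos)
    show ?thesis
    proof (cases "emp_pmf xs y = 0")
      case True then show ?thesis using pp by simp
    next
      case False
      then have q: "emp_pmf xs y > 0" by (simp add: emp_pmf_def)
      have "ln (pmf p y / emp_pmf xs y) \<le> pmf p y / emp_pmf xs y - 1"
        using pp q by (intro ln_le_minus_one) auto
      then have "emp_pmf xs y * ln (pmf p y / emp_pmf xs y) \<le> emp_pmf xs y * (pmf p y / emp_pmf xs y - 1)"
        using q by (intro mult_left_mono) auto
      moreover have "emp_pmf xs y * ln (pmf p y / emp_pmf xs y) = emp_pmf xs y * ln (pmf p y) - emp_pmf xs y * ln (emp_pmf xs y)"
        using pp q by (simp add: ln_div algebra_simps)
      moreover have "emp_pmf xs y * (pmf p y / emp_pmf xs y - 1) = pmf p y - emp_pmf xs y"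
        using q by (simp add: field_simps)
      ultimately show ?thesis by linarith
    qed
  qed
  have "(\<Sum>y\<in>?S. emp_pmf xs y * ln (pmf p y) - emp_pmf xs y * ln (emp_pmf xs y)) \<le> (\<Sum>y\<in>?S. pmf p y - emp_pmf xs y)"
    by (intro sum_mono tm)
  also have "\<dots> = 0" using sum_emp[OF fin xs] sum_pmf_eq_1[OF fin, of p]
    by (simp add: sum_subtractf)
  finally show ?thesis using plugin_H_ext[OF fin xs(1)] by (simp add: sum_subtractf)
qed

definition Wq :: "'a pmf \<Rightarrow> 'a list \<Rightarrow> real" where
  "Wq p xs = (\<Sum>y\<in>set_pmf p. (emp_pmf xs y)\<^sup>2 / pmf p y)"

lemma Wq_pos:
  assumes fin: "finite (set_pmf p)" and xs: "set xs \<subseteq> set_pmf p" "xs \<noteq> []"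
  shows "Wq p xs > 0"
proof -
  obtain y where y: "y \<in> set xs" using xs by (cases xs) auto
  have yS: "y \<in> set_pmf p" using y xs by auto
  have "count_list xs y \<noteq> 0" using y by (simp add: count_list_0_iff)
  then have "emp_pmf xs y > 0" using xs by (simp add: emp_pmf_def)
  then have "0 < (emp_pmf xs y)\<^sup>2 / pmf p y"
    using pmf_pos[OF yS] by simp
  also have "\<dots> \<le> Wq p xs" unfolding Wq_def
    using fin yS by (intro member_le_sum) (auto intro: divide_nonneg_pos pmf_pos)
  finally show ?thesis .
qed

lemma Hhat_lower:
  assumes fin: "finite (set_pmf p)" and xs: "set xs \<subseteq> set_pmf p" "xs \<noteq> []"
  shows "- (\<Sum>y\<in>set_pmf p. emp_pmf xs y * ln (pmf p y)) - ln (Wq p xs) \<le> plugin_H xs"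
proof -
  let ?S = "set_pmf p"
  define W where "W = Wq p xs"
  have W: "W > 0" unfolding W_def by (rule Wq_pos[OF assms])
  have tm: "emp_pmf xs y * ln (emp_pmf xs y) - emp_pmf xs y * ln (pmf p y)
       \<le> emp_pmf xs y * ln W + (emp_pmf xs y)\<^sup>2 / pmf p y / W - emp_pmf xs y"
    if y: "y \<in> ?S" for y
  proof -
    have pp: "pmf p y > 0" using y by (rule pmf_pos)
    show ?thesis
    proof (cases "emp_pmf xs y = 0")
      case True then show ?thesis by simp
    next
      case False
      then have q: "emp_pmf xs y > 0" by (simp add: emp_pmf_def)
      define z where "z = emp_pmf xs y / pmf p y"
      have z: "z > 0" using q pp by (simp add: z_def)
      have "ln (z / W) \<le> z / W - 1" using z W by (intro ln_le_minus_one) auto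
      then have "ln z \<le> ln W + z / W - 1" using z W by (simp add: ln_div)
      then have "emp_pmf xs y * ln z \<le> emp_pmf xs y * (ln W + z / W - 1)"
        using q by (intro mult_left_mono) auto
      moreover have "emp_pmf xs y * ln z = emp_pmf xs y * ln (emp_pmf xs y) - emp_pmf xs y * ln (pmf p y)"
        using pp q by (simp add: z_def ln_div algebra_simps)
      moreover have "emp_pmf xs y * (ln W + z / W - 1) = emp_pmf xs y * ln W + (emp_pmf xs y)\<^sup>2 / pmf p y / W - emp_pmf xs y"
        using pp q W by (simp add: z_def field_simps power2_eq_square)
      ultimately show ?thesis by linarith
    qed
  qed
  have "(\<Sum>y\<in>?S. emp_pmf xs y * ln (emp_pmf xs y) - emp_pmf xs y * ln (pmf p y))
       \<le> (\<Sum>y\<in>?S. emp_pmf xs y * ln W + (emp_pmf xs y)\<^sup>2 / pmf p y / W - emp_pmf xs y)"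
    by (intro sum_mono tm)
  also have "\<dots> = ln W * (\<Sum>y\<in>?S. emp_pmf xs y) + (\<Sum>y\<in>?S. (emp_pmf xs y)\<^sup>2 / pmf p y) / W - (\<Sum>y\<in>?S. emp_pmf xs y)"
    by (simp add: sum_subtractf sum.distrib sum_distrib_left sum_divide_distrib algebra_simps)
  also have "\<dots> = ln W" using sum_emp[OF fin xs] W by (simp add: W_def Wq_def)
  finally show ?thesis using plugin_H_ext[OF fin xs(1)] by (simp add: sum_subtractf W_def)
qed

lemma E_emp:
  assumes fin: "finite (set_pmf p)" and n: "n > 0"
  shows "measure_pmf.expectation (iid p n) (\<lambda>xs. emp_pmf xs y) = pmf p y"
proof -
  have "measure_pmf.expectation (iid p n) (\<lambda>xs. emp_pmf xs y)
      = measure_pmf.expectation (iid p n) (\<lambda>xs. real (count_list xs y) / n)"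
    by (rule integral_cong_AE) (auto simp: AE_measure_pmf_iff set_iid emp_pmf_def)
  also have "\<dots> = pmf p y" using n by (simp add: E_count[OF fin])
  finally show ?thesis .
qed

lemma E_emp2:
  assumes fin: "finite (set_pmf p)" and n: "n > 0"
  shows "measure_pmf.expectation (iid p n) (\<lambda>xs. (emp_pmf xs y)\<^sup>2)
         = (pmf p y)\<^sup>2 + pmf p y * (1 - pmf p y) / n"
proof -
  have "measure_pmf.expectation (iid p n) (\<lambda>xs. (emp_pmf xs y)\<^sup>2)
      = measure_pmf.expectation (iid p n) (\<lambda>xs. (real (count_list xs y))\<^sup>2 / (real n)\<^sup>2)"
    by (rule integral_cong_AE) (auto simp: AE_measure_pmf_iff set_iid emp_pmf_def power_divide)
  also have "\<dots> = measure_pmf.expectation (iid p n) (\<lambda>xs. (real (count_list xs y))\<^sup>2) / (real n)\<^sup>2"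
    by simp
  also have "\<dots> = (n * pmf p y * (1 - pmf p y) + (real n)\<^sup>2 * (pmf p y)\<^sup>2) / (real n)\<^sup>2"
    by (simp only: E_count2[OF fin])
  also have "\<dots> = (pmf p y)\<^sup>2 + pmf p y * (1 - pmf p y) / n"
    using n by (simp add: field_simps power2_eq_square)
  finally show ?thesis .
qed

lemma E_cross:
  assumes fin: "finite (set_pmf p)" and n: "n > 0"
  shows "measure_pmf.expectation (iid p n) (\<lambda>xs. - (\<Sum>y\<in>set_pmf p. emp_pmf xs y * ln (pmf p y)))
         = pmf_entropy p"
proof -
  have fin2: "finite (set_pmf (iid p n))" by (rule finite_set_iid[OF fin])
  have "measure_pmf.expectation (iid p n) (\<lambda>xs. - (\<Sum>y\<in>set_pmf p. emp_pmf xs y * ln (pmf p y)))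
      = - (\<Sum>y\<in>set_pmf p. measure_pmf.expectation (iid p n) (\<lambda>xs. emp_pmf xs y) * ln (pmf p y))"
    by (simp add: Bochner_Integration.integral_sum fin2 integrable_measure_pmf_finite)
  also have "\<dots> = pmf_entropy p"
    by (simp add: E_emp[OF fin n] pmf_entropy_def shannon_H_def)
  finally show ?thesis .
qed

lemma EH_upper:
  assumes fin: "finite (set_pmf p)" and n: "n > 0"
  shows "measure_pmf.expectation (iid p n) plugin_H \<le> pmf_entropy p"
proof -
  have fin2: "finite (set_pmf (iid p n))" by (rule finite_set_iid[OF fin])
  have "measure_pmf.expectation (iid p n) plugin_H
     \<le> measure_pmf.expectation (iid p n) (\<lambda>xs. - (\<Sum>y\<in>set_pmf p. emp_pmf xs y * ln (pmf p y)))"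
    using n by (intro E_mono[OF fin2] Hhat_upper[OF fin]) (auto simp: set_iid)
  also have "\<dots> = pmf_entropy p" by (rule E_cross[OF fin n])
  finally show ?thesis .
qed

lemma EH_lower:
  assumes fin: "finite (set_pmf p)" and n: "n > 0" and m: "real (card (set_pmf p)) \<le> m"
  shows "pmf_entropy p - ln (1 + (m - 1) / n) \<le> measure_pmf.expectation (iid p n) plugin_H"
proof -
  let ?S = "set_pmf p"
  have fin2: "finite (set_pmf (iid p n))" by (rule finite_set_iid[OF fin])
  have xsprop: "set xs \<subseteq> ?S" "xs \<noteq> []" if "xs \<in> set_pmf (iid p n)" for xs
    using that n by (auto simp: set_iid)
  define \<mu> where "\<mu> = measure_pmf.expectation (iid p n) (Wq p)"
  have mu: "\<mu> = 1 + (real (card ?S) - 1) / n"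
  proof -
    have "\<mu> = (\<Sum>y\<in>?S. measure_pmf.expectation (iid p n) (\<lambda>xs. (emp_pmf xs y)\<^sup>2) / pmf p y)"
      unfolding \<mu>_def Wq_def
      by (simp add: Bochner_Integration.integral_sum fin2 integrable_measure_pmf_finite)
    also have "\<dots> = (\<Sum>y\<in>?S. ((pmf p y)\<^sup>2 + pmf p y * (1 - pmf p y) / n) / pmf p y)"
      by (intro sum.cong refl) (simp only: E_emp2[OF fin n])
    also have "\<dots> = (\<Sum>y\<in>?S. pmf p y + (1 - pmf p y) / n)"
    proof (intro sum.cong refl)
      fix y assume "y \<in> ?S"
      then have "pmf p y > 0" by (rule pmf_pos)
      then show "((pmf p y)\<^sup>2 + pmf p y * (1 - pmf p y) / n) / pmf p y = pmf p y + (1 - pmf p y) / n"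
        by (simp add: field_simps power2_eq_square)
    qed
    also have "\<dots> = 1 + (real (card ?S) - 1) / n"
      using sum_pmf_eq_1[OF fin, of p] by (simp add: sum.distrib sum_divide_distrib[symmetric] sum_subtractf)
    finally show ?thesis .
  qed
  have mupos: "\<mu> > 0"
  proof -
    have "card ?S \<ge> 1" using fin set_pmf_not_empty[of p]
      by (metis One_nat_def Suc_leI card_gt_0_iff)
    then have "(real (card ?S) - 1) / n \<ge> 0" using n by simp
    then show ?thesis by (simp add: mu)
  qed
  have lnW: "measure_pmf.expectation (iid p n) (\<lambda>xs. ln (Wq p xs)) \<le> ln \<mu>"
  proof -
    have "measure_pmf.expectation (iid p n) (\<lambda>xs. ln (Wq p xs))
        \<le> measure_pmf.expectation (iid p n) (\<lambda>xs. ln \<mu> + Wq p xs / \<mu> - 1)"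
    proof (rule E_mono[OF fin2])
      fix xs assume "xs \<in> set_pmf (iid p n)"
      then have W: "Wq p xs > 0" using xsprop Wq_pos[OF fin] by blast
      have "ln (Wq p xs / \<mu>) \<le> Wq p xs / \<mu> - 1" using W mupos by (intro ln_le_minus_one) auto
      then show "ln (Wq p xs) \<le> ln \<mu> + Wq p xs / \<mu> - 1" using W mupos by (simp add: ln_div)
    qed
    also have "\<dots> = ln \<mu>"
      using mupos by (simp add: fin2 integrable_measure_pmf_finite \<mu>_def[symmetric])
    finally show ?thesis .
  qed
  have "measure_pmf.expectation (iid p n) (\<lambda>xs. - (\<Sum>y\<in>?S. emp_pmf xs y * ln (pmf p y)) - ln (Wq p xs))
       \<le> measure_pmf.expectation (iid p n) plugin_H"
    by (intro E_mono[OF fin2] Hhat_lower[OF fin]) (auto dest: xsprop)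
  moreover have "measure_pmf.expectation (iid p n) (\<lambda>xs. - (\<Sum>y\<in>?S. emp_pmf xs y * ln (pmf p y)) - ln (Wq p xs))
       = pmf_entropy p - measure_pmf.expectation (iid p n) (\<lambda>xs. ln (Wq p xs))"
    by (subst Bochner_Integration.integral_diff) (auto simp only: fin2 integrable_measure_pmf_finite E_cross[OF fin n])
  moreover have "ln \<mu> \<le> ln (1 + (m - 1) / n)"
  proof -
    have "(real (card ?S) - 1) / n \<le> (m - 1) / n" using m n by (intro divide_right_mono) auto
    then have "\<mu> \<le> 1 + (m - 1) / n" by (simp add: mu)
    then show ?thesis using mupos by simp
  qed
  ultimately show ?thesis using lnW by linarith
qed



definition dev :: "nat \<Rightarrow> real \<Rightarrow> real" where
  "dev s \<delta> = sqrt (2 * (ln (real s))\<^sup>2 / real s * ln (2 / \<delta>))"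

lemma ucd_eq: "ucd m xs \<delta> = ln (1 + (real m - 1) / real (length xs)) + dev (length xs) \<delta>"
  by (simp add: ucd_def dev_def Let_def)

lemma pmf_entropy_nonneg: "0 \<le> pmf_entropy p"
proof -
  have "pmf p y * ln (pmf p y) \<le> 0" if "y \<in> set_pmf p" for y
  proof -
    have "pmf p y > 0" using that by (rule pmf_pos)
    moreover have "pmf p y \<le> 1" by (rule pmf_le_1)
    ultimately have "ln (pmf p y) \<le> 0" by simp
    then show ?thesis using \<open>pmf p y > 0\<close> by (simp add: mult_nonneg_nonpos)
  qed
  then show ?thesis unfolding pmf_entropy_def shannon_H_def
    by (simp add: sum_nonpos)
qed

lemma plugin_H_single: "plugin_H [x] = 0"
  by (simp add: plugin_H_def shannon_H_def emp_pmf_def)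

lemma prob_mono_supp:
  assumes "\<And>xs. xs \<in> set_pmf q \<Longrightarrow> xs \<in> A \<Longrightarrow> xs \<in> B"
  shows "measure_pmf.prob q A \<le> measure_pmf.prob q B"
proof -
  have "measure_pmf.prob q A = measure_pmf.prob q (A \<inter> set_pmf q)"
    by (simp add: measure_Int_set_pmf)
  also have "\<dots> \<le> measure_pmf.prob q B"
    using assms by (intro measure_pmf.finite_measure_mono) auto
  finally show ?thesis .
qed

lemma prob_empty_supp:
  assumes "\<And>xs. xs \<in> set_pmf q \<Longrightarrow> xs \<notin> A"
  shows "measure_pmf.prob q A = 0"
  using prob_mono_supp[of q A "{}"] assms by (simp add: measure_nonneg antisym)

lemma E_iid_one:
  assumes fin: "finite (set_pmf p)"
  shows "measure_pmf.expectation (iid p 1) plugin_H = 0"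
proof -
  have "measure_pmf.expectation (iid p 1) plugin_H = measure_pmf.expectation (iid p 1) (\<lambda>_. 0)"
    by (rule integral_cong_AE) (auto simp: AE_measure_pmf_iff set_iid length_Suc_conv plugin_H_single)
  then show ?thesis by simp
qed

lemma entropy_le_ln_card:
  assumes fin: "finite (set_pmf p)" and m: "real (card (set_pmf p)) \<le> real m"
  shows "pmf_entropy p \<le> ln (real m)"
  using EH_lower[OF fin _ m, of 1] E_iid_one[OF fin] by simp

lemma mcd_exponent:
  assumes s: "2 \<le> s" and \<delta>: "0 < \<delta>" "\<delta> \<le> 1"
  shows "exp (- 2 * (dev s \<delta>)\<^sup>2 / (real s * (2 * ln (real s) / real s)\<^sup>2)) = \<delta> / 2"
proof -
  have ls: "ln (real s) > 0" using s by simp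
  have L: "ln (2 / \<delta>) > 0" using \<delta> by simp
  have "(dev s \<delta>)\<^sup>2 = 2 * (ln (real s))\<^sup>2 / real s * ln (2 / \<delta>)"
    unfolding dev_def using ls L s by (subst real_sqrt_pow2) auto
  then have "- 2 * (dev s \<delta>)\<^sup>2 / (real s * (2 * ln (real s) / real s)\<^sup>2) = - ln (2 / \<delta>)"
    using ls s by (simp add: field_simps power2_eq_square)
  moreover have "exp (- ln (2 / \<delta>)) = \<delta> / 2" using \<delta> by (simp add: exp_minus)
  ultimately show ?thesis by simp
qed

lemma dev_pos: "2 \<le> s \<Longrightarrow> 0 < \<delta> \<Longrightarrow> \<delta> \<le> 1 \<Longrightarrow> dev s \<delta> > 0"
  unfolding dev_def by (intro real_sqrt_gt_zero mult_pos_pos divide_pos_pos) auto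

lemma dev_one: "dev 1 \<delta> = 0" "dev (Suc 0) \<delta> = 0"
  by (simp_all add: dev_def)

lemma probA:
  assumes fin: "finite (set_pmf p)" and m: "real (card (set_pmf p)) \<le> real m"
    and s: "1 \<le> s" and \<delta>: "0 < \<delta>" "\<delta> \<le> 1"
  shows "measure_pmf.prob (iid p s) {xs. plugin_H xs + ucd m xs \<delta> < pmf_entropy p} \<le> \<delta> / 2"
proof (cases "s = 1")
  case True
  have "measure_pmf.prob (iid p s) {xs. plugin_H xs + ucd m xs \<delta> < pmf_entropy p} = 0"
  proof (rule prob_empty_supp)
    fix xs assume "xs \<in> set_pmf (iid p s)"
    then obtain x where xs: "xs = [x]" using True by (auto simp: set_iid length_Suc_conv)
    have "pmf_entropy p \<le> ln (real m)" by (rule entropy_le_ln_card[OF fin m])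
    moreover have "m \<ge> 1" using m fin set_pmf_not_empty[of p]
      by (metis card_0_eq le_zero_eq not_less_eq_eq of_nat_le_iff One_nat_def)
    ultimately show "xs \<notin> {xs. plugin_H xs + ucd m xs \<delta> < pmf_entropy p}"
      by (simp add: xs plugin_H_single ucd_eq dev_one)
  qed
  then show ?thesis using \<delta> by simp
next
  case False
  then have s2: "2 \<le> s" using s by simp
  define c where "c = 2 * ln (real s) / real s"
  have c: "c > 0" using s2 by (simp add: c_def)
  define d where "d = dev s \<delta>"
  have d: "d > 0" unfolding d_def using s2 \<delta> by (rule dev_pos)
  have EH: "pmf_entropy p - ln (1 + (real m - 1) / s) \<le> measure_pmf.expectation (iid p s) plugin_H"
    using EH_lower[OF fin _ m, of s] s by simp
  have EH': "measure_pmf.expectation (iid p s) (\<lambda>xs. - plugin_H xs) = - measure_pmf.expectation (iid p s) plugin_H"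
    by simp
  have "measure_pmf.prob (iid p s) {xs. plugin_H xs + ucd m xs \<delta> < pmf_entropy p}
      \<le> measure_pmf.prob (iid p s) {xs. (- plugin_H xs) - measure_pmf.expectation (iid p s) (\<lambda>xs. - plugin_H xs) \<ge> d}"
  proof (rule prob_mono_supp)
    fix xs assume "xs \<in> set_pmf (iid p s)" "xs \<in> {xs. plugin_H xs + ucd m xs \<delta> < pmf_entropy p}"
    then have "length xs = s" "plugin_H xs + ln (1 + (real m - 1) / s) + d < pmf_entropy p"
      by (auto simp: set_iid ucd_eq d_def)
    then show "xs \<in> {xs. (- plugin_H xs) - measure_pmf.expectation (iid p s) (\<lambda>xs. - plugin_H xs) \<ge> d}"
      using EH by (simp only: EH') auto
  qed
  also have "\<dots> \<le> exp (- 2 * d\<^sup>2 / (real s * c\<^sup>2))"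
    using s2 by (intro mcdiarmid[OF fin _ c _ d] BD_uminus) (auto simp: c_def intro: BD_plugin_H)
  also have "\<dots> = \<delta> / 2" unfolding d_def c_def by (rule mcd_exponent[OF s2 \<delta>])
  finally show ?thesis .
qed

lemma probB:
  assumes fin: "finite (set_pmf p)" and s: "1 \<le> s" and \<delta>: "0 < \<delta>" "\<delta> \<le> 1"
    and hyp: "ln (1 + (real m - 1) / real s) + 2 * dev s \<delta> < Hs - pmf_entropy p"
  shows "measure_pmf.prob (iid p s) {xs. Hs \<le> plugin_H xs + ucd m xs \<delta>} \<le> \<delta> / 2"
proof (cases "s = 1")
  case True
  have "measure_pmf.prob (iid p s) {xs. Hs \<le> plugin_H xs + ucd m xs \<delta>} = 0"
  proof (rule prob_empty_supp)
    fix xs assume "xs \<in> set_pmf (iid p s)"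
    then obtain x where xs: "xs = [x]" using True by (auto simp: set_iid length_Suc_conv)
    show "xs \<notin> {xs. Hs \<le> plugin_H xs + ucd m xs \<delta>}"
      using hyp pmf_entropy_nonneg[of p] True by (simp add: xs plugin_H_single ucd_eq dev_one)
  qed
  then show ?thesis using \<delta> by simp
next
  case False
  then have s2: "2 \<le> s" using s by simp
  define c where "c = 2 * ln (real s) / real s"
  have c: "c > 0" using s2 by (simp add: c_def)
  define d where "d = dev s \<delta>"
  have d: "d > 0" unfolding d_def using s2 \<delta> by (rule dev_pos)
  have EH: "measure_pmf.expectation (iid p s) plugin_H \<le> pmf_entropy p"
    using EH_upper[OF fin, of s] s by simp
  have "measure_pmf.prob (iid p s) {xs. Hs \<le> plugin_H xs + ucd m xs \<delta>}
      \<le> measure_pmf.prob (iid p s) {xs. plugin_H xs - measure_pmf.expectation (iid p s) plugin_H \<ge> d}"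
  proof (rule prob_mono_supp)
    fix xs assume "xs \<in> set_pmf (iid p s)" "xs \<in> {xs. Hs \<le> plugin_H xs + ucd m xs \<delta>}"
    then have "length xs = s" "Hs \<le> plugin_H xs + ln (1 + (real m - 1) / s) + d"
      by (auto simp: set_iid ucd_eq d_def)
    then show "xs \<in> {xs. plugin_H xs - measure_pmf.expectation (iid p s) plugin_H \<ge> d}"
      using EH hyp unfolding d_def[symmetric] by auto
  qed
  also have "\<dots> \<le> exp (- 2 * d\<^sup>2 / (real s * c\<^sup>2))"
    using s2 by (intro mcdiarmid[OF fin _ c _ d]) (auto simp: c_def intro: BD_plugin_H)
  also have "\<dots> = \<delta> / 2" unfolding d_def c_def by (rule mcd_exponent[OF s2 \<delta>])
  finally show ?thesis .
qed



lemma prod_list_nth: "prod_list (map f xs) = (\<Prod>k<length xs. f (xs ! k))"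
proof (induction xs)
  case Nil then show ?case by simp
next
  case (Cons x xs)
  have "(\<Prod>k<length (x # xs). f ((x # xs) ! k)) = f x * (\<Prod>k<length xs. f (xs ! k))"
    unfolding length_Cons prod.lessThan_Suc_shift by simp
  then show ?case using Cons by simp
qed

lemma imab_pps: "product_prob_space (\<lambda>(i, k). measure_pmf (p i))"
proof -
  have "prob_space ((\<lambda>(i, k). measure_pmf (p i)) ik)" for ik
    by (cases ik) (simp add: prob_space_measure_pmf)
  then show ?thesis
    by (intro product_prob_space.intro product_sigma_finite.intro product_prob_space_axioms.intro)
       (auto intro: prob_space_imp_sigma_finite)
qed

lemma space_imab: "space (imab_space p) = UNIV"
  by (auto simp: imab_space_def space_PiM PiE_def extensional_def Pi_def split: prod.splits)

lemma sets_imab_collect: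
  assumes "finite J"
  shows "{\<omega>. \<forall>ik\<in>J. \<omega> ik \<in> X ik} \<in> sets (imab_space p)"
proof -
  have "{\<omega>. \<forall>ik\<in>J. \<omega> ik \<in> X ik} = prod_emb UNIV (\<lambda>(i, k). measure_pmf (p i)) J (Pi\<^sub>E J X)"
    by (auto simp: prod_emb_def space_PiM)
  also have "\<dots> \<in> sets (imab_space p)"
    unfolding imab_space_def using assms by (intro sets_PiM_I) auto
  finally show ?thesis .
qed

lemma measure_imab_collect:
  assumes "finite J"
  shows "measure (imab_space p) {\<omega>. \<forall>ik\<in>J. \<omega> ik \<in> X ik}
          = (\<Prod>ik\<in>J. measure (measure_pmf (p (fst ik))) (X ik))"
proof -
  interpret product_prob_space "\<lambda>(i, k). measure_pmf (p i)" UNIV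
    by (rule imab_pps)
  have "emeasure (imab_space p) {\<omega>. \<forall>ik\<in>J. \<omega> ik \<in> X ik}
      = (\<Prod>ik\<in>J. emeasure ((\<lambda>(i, k). measure_pmf (p i)) ik) (X ik))"
  proof -
    have "X i \<in> sets ((\<lambda>(i, k). measure_pmf (p i)) i)" for i by (auto split: prod.splits)
    then show ?thesis
      using emeasure_PiM_Collect[of J X] assms space_imab[of p] unfolding imab_space_def
      by simp
  qed
  also have "\<dots> = (\<Prod>ik\<in>J. ennreal (measure (measure_pmf (p (fst ik))) (X ik)))"
    by (intro prod.cong refl) (auto simp: measure_pmf.emeasure_eq_measure split: prod.splits)
  also have "\<dots> = ennreal (\<Prod>ik\<in>J. measure (measure_pmf (p (fst ik))) (X ik))"
    by (simp add: prod_ennreal)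
  finally have "ennreal (measure (imab_space p) {\<omega>. \<forall>ik\<in>J. \<omega> ik \<in> X ik}) =
      ennreal (\<Prod>ik\<in>J. measure (measure_pmf (p (fst ik))) (X ik))"
    by (simp add: imab_space_def P.emeasure_eq_measure)
  then show ?thesis
    by (subst (asm) ennreal_inj) (auto intro: prod_nonneg)
qed

lemma prob_space_imab: "prob_space (imab_space p)"
proof -
  interpret product_prob_space "\<lambda>(i, k). measure_pmf (p i)" UNIV
    by (rule imab_pps)
  show ?thesis unfolding imab_space_def by unfold_locales
qed

lemma bridge:
  assumes fin: "finite (set_pmf (p j))"
  shows "\<exists>T \<in> sets (imab_space p). measure (imab_space p) T \<le> measure_pmf.prob (iid (p j) s) E
           \<and> {\<omega>. map (\<lambda>k. \<omega> (j, k)) [0..<s] \<in> E} \<subseteq> T"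
proof -
  interpret P: prob_space "imab_space p" by (rule prob_space_imab)
  define J where "J = {j} \<times> {..<s}"
  have finJ: "finite J" by (simp add: J_def)
  define D where "D = E \<inter> set_pmf (iid (p j) s)"
  have finD: "finite D" unfolding D_def using finite_set_iid[OF fin] by simp
  define Cyl where "Cyl xs = {\<omega>. \<forall>ik\<in>J. \<omega> ik \<in> {xs ! snd ik}}" for xs :: "'a list"
  define Bad where "Bad k = {\<omega>. \<forall>ik\<in>{(j, k)}. \<omega> ik \<in> - set_pmf (p j)}" for k :: nat
  define T where "T = (\<Union>xs\<in>D. Cyl xs) \<union> (\<Union>k\<in>{..<s}. Bad k)"
  have CylS: "Cyl xs \<in> sets (imab_space p)" for xs
    unfolding Cyl_def by (rule sets_imab_collect[OF finJ])
  have BadS: "Bad k \<in> sets (imab_space p)" for k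
    unfolding Bad_def by (rule sets_imab_collect) simp
  have CylM: "measure (imab_space p) (Cyl xs) = pmf (iid (p j) s) xs" if "xs \<in> D" for xs
  proof -
    have len: "length xs = s" using that by (auto simp: D_def set_iid)
    have "measure (imab_space p) (Cyl xs) = (\<Prod>ik\<in>J. measure (measure_pmf (p (fst ik))) {xs ! snd ik})"
      unfolding Cyl_def by (rule measure_imab_collect[OF finJ])
    also have "\<dots> = (\<Prod>ik\<in>J. pmf (p j) (xs ! snd ik))"
      by (intro prod.cong refl) (auto simp: J_def measure_pmf_single)
    also have "\<dots> = (\<Prod>k<s. pmf (p j) (xs ! k))"
    proof -
      have eqJ: "J = (\<lambda>k. (j, k)) ` {..<s}" by (auto simp: J_def)
      show ?thesis unfolding eqJ by (subst prod.reindex) (auto simp: inj_on_def)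
    qed
    also have "\<dots> = pmf (iid (p j) s) xs"
      by (simp add: pmf_iid len prod_list_nth)
    finally show ?thesis .
  qed
  have BadM: "measure (imab_space p) (Bad k) = 0" for k
  proof -
    have "measure (imab_space p) (Bad k) = (\<Prod>ik\<in>{(j,k)}. measure (measure_pmf (p (fst ik))) (- set_pmf (p j)))"
      unfolding Bad_def by (rule measure_imab_collect) simp
    also have "\<dots> = 0" by (simp add: measure_pmf_zero_iff)
    finally show ?thesis .
  qed
  have U1: "(\<Union>xs\<in>D. Cyl xs) \<in> sets (imab_space p)"
    using finD CylS by (intro sets.finite_UN) auto
  have U2: "(\<Union>k\<in>{..<s}. Bad k) \<in> sets (imab_space p)"
    using BadS by (intro sets.finite_UN) auto
  have TS: "T \<in> sets (imab_space p)" unfolding T_def using U1 U2 by auto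
  have "measure (imab_space p) T \<le> measure (imab_space p) (\<Union>xs\<in>D. Cyl xs) + measure (imab_space p) (\<Union>k\<in>{..<s}. Bad k)"
    unfolding T_def by (rule measure_Un_le[OF U1 U2])
  also have "measure (imab_space p) (\<Union>xs\<in>D. Cyl xs) \<le> (\<Sum>xs\<in>D. measure (imab_space p) (Cyl xs))"
    by (rule measure_UNION_le[OF finD CylS])
  also have "(\<Sum>xs\<in>D. measure (imab_space p) (Cyl xs)) = (\<Sum>xs\<in>D. pmf (iid (p j) s) xs)"
    by (intro sum.cong refl CylM)
  also have "\<dots> = measure_pmf.prob (iid (p j) s) D"
    by (rule measure_measure_pmf_finite[symmetric, OF finD])
  also have "\<dots> = measure_pmf.prob (iid (p j) s) E"
    unfolding D_def by (simp add: measure_Int_set_pmf)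
  also have "measure (imab_space p) (\<Union>k\<in>{..<s}. Bad k) \<le> (\<Sum>k<s. measure (imab_space p) (Bad k))"
    by (rule measure_UNION_le) (auto intro: BadS)
  also have "\<dots> = 0" by (simp add: BadM)
  finally have meas: "measure (imab_space p) T \<le> measure_pmf.prob (iid (p j) s) E" by simp
  have sub: "{\<omega>. map (\<lambda>k. \<omega> (j, k)) [0..<s] \<in> E} \<subseteq> T"
  proof
    fix \<omega> assume \<omega>: "\<omega> \<in> {\<omega>. map (\<lambda>k. \<omega> (j, k)) [0..<s] \<in> E}"
    show "\<omega> \<in> T"
    proof (cases "\<forall>k<s. \<omega> (j, k) \<in> set_pmf (p j)")
      case True
      define xs where "xs = map (\<lambda>k. \<omega> (j, k)) [0..<s]"
      have "xs \<in> D" using \<omega> True by (auto simp: D_def xs_def set_iid)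
      moreover have "\<omega> \<in> Cyl xs" by (auto simp: Cyl_def J_def xs_def)
      ultimately show ?thesis by (auto simp: T_def)
    next
      case False
      then obtain k where "k < s" "\<omega> (j, k) \<notin> set_pmf (p j)" by auto
      then show ?thesis by (auto simp: T_def Bad_def)
    qed
  qed
  show ?thesis using TS meas sub by blast
qed



lemma e_lower: "2716 / 1000 \<le> exp (1::real)"
proof -
  obtain t where "exp (1::real) = (\<Sum>m<6. 1 ^ m / fact m) + exp t / fact 6 * 1 ^ 6"
    using Maclaurin_exp_le[of 1 6] by auto
  moreover have "(\<Sum>m<6. (1::real) ^ m / fact m) = 1 + 1 + 1/2 + 1/6 + 1/24 + 1/120"
    by (simp add: eval_nat_numeral fact_numeral)
  moreover have "exp t / fact 6 * 1 ^ 6 \<ge> (0::real)" by simp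
  ultimately show ?thesis by linarith
qed

lemma ln2_upper: "ln (2::real) \<le> 7 / 10"
proof -
  obtain t where "exp (7/10::real) = (\<Sum>m<4. (7/10) ^ m / fact m) + exp t / fact 4 * (7/10) ^ 4"
    using Maclaurin_exp_le[of "7/10" 4] by auto
  moreover have "(\<Sum>m<4. (7/10::real) ^ m / fact m) = 1 + 7/10 + 49/200 + 343/6000"
    by (simp add: eval_nat_numeral fact_numeral)
  moreover have "exp t / fact 4 * (7/10) ^ 4 \<ge> (0::real)" by simp
  ultimately have "2 \<le> exp (7/10::real)" by linarith
  then have "ln 2 \<le> ln (exp (7/10::real))" by (subst ln_le_cancel_iff) auto
  then show ?thesis by simp
qed

lemma ln_le_tangent: "0 < x \<Longrightarrow> 0 < a \<Longrightarrow> ln x \<le> ln a + x / a - (1::real)"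
  using ln_le_minus_one[of "x / a"] by (simp add: ln_div)

lemma key_numeric:
  fixes S s :: real
  assumes S: "S > 0" and s1: "1 \<le> s" and ss: "15 * (S * (ln S)\<^sup>2) \<le> s"
  shows "S * (ln s)\<^sup>2 \<le> s"
proof -
  define y where "y = sqrt s"
  have y: "y > 0" "y\<^sup>2 = s" using s1 by (auto simp: y_def)
  have lns: "ln s = 2 * ln y"
  proof -
    have "ln s = ln (y * y)" using y(2) by (simp add: power2_eq_square)
    also have "\<dots> = 2 * ln y" using y(1) by (simp add: ln_mult)
    finally show ?thesis .
  qed
  have lns0: "0 \<le> ln s" using s1 by simp
  show ?thesis
  proof (cases "S \<le> exp 2 / 4")
    case True
    have "ln (y / exp 1) \<le> y / exp 1 - 1" using y by (intro ln_le_minus_one) auto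
    then have "ln y \<le> y / exp 1" using y by (simp add: ln_div)
    then have "ln s \<le> 2 * y / exp 1" using lns by simp
    then have "(ln s)\<^sup>2 \<le> (2 * y / exp 1)\<^sup>2" using lns0 by (intro power_mono) auto
    also have "\<dots> = 4 * s / exp 2"
      using y by (simp add: power2_eq_square field_simps flip: exp_add)
    finally have "S * (ln s)\<^sup>2 \<le> (exp 2 / 4) * (4 * s / exp 2)"
      using True S by (intro mult_mono) auto
    then show ?thesis by simp
  next
    case False
    define L where "L = ln S"
    have "ln (exp 2 / 4) < L" using False S by (simp add: L_def)
    moreover have "ln (exp 2 / 4 :: real) = 2 - 2 * ln 2"
      by (simp add: ln_div ln_realpow[of 2 2, simplified])
    ultimately have L6: "L > 6 / 10" using ln2_upper by simp
    define s0 where "s0 = 15 * S * L\<^sup>2"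
    have s0pos: "s0 > 0" using S L6 by (simp add: s0_def)
    define y0 where "y0 = sqrt s0"
    have y0: "y0 > 0" "y0\<^sup>2 = s0" using s0pos by (auto simp: y0_def)
    have sqS: "sqrt S > 0" "(sqrt S)\<^sup>2 = S" using S by auto
    have y0S: "y0 = sqrt 15 * L * sqrt S"
      unfolding y0_def s0_def using L6 S by (simp add: real_sqrt_mult)
    have s15: "27 / 7 \<le> sqrt (15::real)" by (rule real_le_rsqrt) (simp add: power2_eq_square)
    have lnL: "ln L \<le> ln (7/10) + L / (7/10) - 1" using L6 by (intro ln_le_tangent) auto
    have e2: "735 / 100 \<le> exp (2::real)"
    proof -
      have "(2716 / 1000)\<^sup>2 \<le> (exp (1::real))\<^sup>2" using e_lower by (intro power_mono) auto
      also have "\<dots> = exp 2" by (simp add: power2_eq_square flip: exp_add)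
      finally show ?thesis by (simp add: power2_eq_square)
    qed
    have "ln (735 / 100 :: real) \<le> ln (exp 2)" using e2 by (subst ln_le_cancel_iff) auto
    then have ln735: "ln (735 / 100 :: real) \<le> 2" by simp
    have "ln s0 = ln 15 + L + 2 * ln L"
    proof -
      have L0: "L > 0" using L6 by simp
      have "s0 = 15 * S * (L * L)" by (simp add: s0_def power2_eq_square)
      then have "ln s0 = ln (15 * S) + ln (L * L)" using S L0 by (simp add: ln_mult)
      also have "\<dots> = ln 15 + L + 2 * ln L" using S L0 by (simp add: ln_mult L_def)
      finally show ?thesis .
    qed
    also have "\<dots> \<le> ln 15 + L + 2 * (ln (7/10) + L / (7/10) - 1)" using lnL by simp
    also have "\<dots> = ln (735 / 100) - 2 + (27 / 7) * L"
    proof -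
      have "ln (735 / 100 :: real) = ln 15 + 2 * ln (7/10)"
      proof -
        have "(735 / 100 :: real) = 15 * (7/10) * (7/10)" by simp
        then show ?thesis by (simp only: ln_mult) simp
      qed
      then show ?thesis by simp
    qed
    also have "\<dots> \<le> sqrt 15 * L"
    proof -
      have "27 / 7 * L \<le> sqrt 15 * L" using L6 by (intro mult_right_mono[OF s15]) auto
      then show ?thesis using ln735 by linarith
    qed
    finally have lnss0: "ln s0 \<le> sqrt 15 * L" .
    have i: "2 * ln y0 \<le> y0 / sqrt S"
    proof -
      have "ln s0 = ln (y0 * y0)" using y0(2) by (simp add: power2_eq_square)
      also have "\<dots> = 2 * ln y0" using y0(1) by (simp add: ln_mult)
      finally have "2 * ln y0 = ln s0" by simp
      also have "\<dots> \<le> sqrt 15 * L" by (rule lnss0)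
      also have "\<dots> = y0 / sqrt S" using y0S sqS by simp
      finally show ?thesis .
    qed
    have slope: "2 * sqrt S \<le> y0"
    proof -
      have "2 \<le> sqrt 15 * L"
      proof -
        have "(2::real) \<le> 27/7 * (6/10)" by simp
        also have "\<dots> \<le> sqrt 15 * L" using s15 L6 by (intro mult_mono) auto
        finally show ?thesis .
      qed
      then show ?thesis unfolding y0S using sqS by (intro mult_right_mono) auto
    qed
    have yy0: "y0 \<le> y"
    proof -
      have "s0 \<le> s" using ss by (simp add: s0_def L_def)
      then show ?thesis unfolding y0_def y_def by simp
    qed
    have "2 * ln y \<le> 2 * (ln y0 + y / y0 - 1)" using y y0 ln_le_tangent[of y y0] by simp
    also have "\<dots> \<le> y / sqrt S"
    proof -
      have "(y - y0) * (2 / y0) \<le> (y - y0) * (1 / sqrt S)"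
      proof (intro mult_left_mono)
        have "sqrt S * 2 / y0 \<le> 1" using slope y0(1) by (simp add: pos_divide_le_eq)
        then show "2 / y0 \<le> 1 / sqrt S" using sqS(1) y0(1) by (simp add: field_simps)
      qed (use yy0 in auto)
      then have "2 * y / y0 - 2 \<le> y / sqrt S - y0 / sqrt S"
        using y0 sqS by (simp add: field_simps)
      then show ?thesis using i by (simp add: algebra_simps)
    qed
    finally have "ln s \<le> y / sqrt S" using lns by simp
    then have "(ln s)\<^sup>2 \<le> (y / sqrt S)\<^sup>2" using lns0 by (intro power_mono) auto
    also have "\<dots> = s / S" using y sqS by (simp add: power_divide)
    finally show ?thesis using S by (simp add: field_simps)
  qed
qed

lemma tele_term:
  fixes r x :: real
  assumes r: "r > 0" and x: "x \<ge> 2"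
  shows "x powr (- 1 - r) \<le> ((x - 1) powr (- r) - x powr (- r)) / r"
proof -
  have x0: "x > 0" "x - 1 > 0" using x by auto
  have l: "ln (x / (x - 1)) \<ge> 1 / x"
  proof -
    have "ln ((x - 1) / x) \<le> (x - 1) / x - 1" using x0 by (intro ln_le_minus_one) auto
    moreover have "ln ((x - 1) / x) = - ln (x / (x - 1))" using x0 by (simp add: ln_div)
    moreover have "(x - 1) / x - 1 = - (1 / x)" using x0 by (simp add: field_simps)
    ultimately show ?thesis by simp
  qed
  have "(x - 1) powr (- r) = x powr (- r) * exp (r * ln (x / (x - 1)))"
    using x0 by (simp add: powr_def ln_div flip: exp_add) (simp add: algebra_simps)
  also have "\<dots> \<ge> x powr (- r) * (1 + r * (1 / x))"
  proof -
    have "r * (1 / x) \<le> r * ln (x / (x - 1))" using l r by (intro mult_left_mono) auto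
    then have "1 + r * (1 / x) \<le> 1 + r * ln (x / (x - 1))" by simp
    also have "\<dots> \<le> exp (r * ln (x / (x - 1)))" by simp
    finally show ?thesis by (intro mult_left_mono) auto
  qed
  finally have "r * (x powr (- r) / x) \<le> (x - 1) powr (- r) - x powr (- r)"
    by (simp add: algebra_simps)
  moreover have "x powr (- r) / x = x powr (- 1 - r)"
    using x0 by (simp add: powr_diff powr_minus field_simps powr_add)
  ultimately show ?thesis using r by (simp add: field_simps)
qed

lemma sum_bound:
  fixes \<alpha> :: real
  assumes a: "\<alpha> > 2"
  shows "(\<Sum>\<tau>\<in>{1..t}. real (\<tau> - 1) * real \<tau> powr (- \<alpha>)) \<le> 1 / (\<alpha> - 2)"
proof -
  define r where "r = \<alpha> - 2"
  have r: "r > 0" using a by (simp add: r_def)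
  have main: "(\<Sum>\<tau>\<in>{1..t}. real (\<tau> - 1) * real \<tau> powr (- \<alpha>)) \<le> (1 - real t powr (- r)) / r" if "t \<ge> 1" for t
    using that
  proof (induction t rule: dec_induct)
    case base then show ?case by simp
  next
    case (step n)
    have n1: "real n \<ge> 1" using step by simp
    have "real (Suc n - 1) * real (Suc n) powr (- \<alpha>) \<le> real (Suc n) * real (Suc n) powr (- \<alpha>)"
      by (intro mult_right_mono) auto
    also have "\<dots> = real (Suc n) powr (- 1 - r)"
    proof -
      have "real (Suc n) powr (1 + - \<alpha>) = real (Suc n) powr 1 * real (Suc n) powr (- \<alpha>)"
        by (rule powr_add)
      moreover have "- 1 - r = 1 + - \<alpha>" by (simp add: r_def)
      ultimately show ?thesis by (simp only:) simp
    qed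
    also have "\<dots> \<le> ((real (Suc n) - 1) powr (- r) - real (Suc n) powr (- r)) / r"
      using n1 by (intro tele_term r) auto
    finally have "real (Suc n - 1) * real (Suc n) powr (- \<alpha>) \<le> (real n powr (- r) - real (Suc n) powr (- r)) / r"
      by simp
    then show ?case using step.IH
      by (simp add: diff_divide_distrib)
  qed
  show ?thesis
  proof (cases "t \<ge> 1")
    case True
    have "(1 - real t powr (- r)) / r \<le> 1 / r" using r by (intro divide_right_mono) auto
    then show ?thesis using main[OF True] by (simp add: r_def)
  next
    case False
    then show ?thesis using a by simp
  qed
qed



definition Lst :: "(nat \<times> nat \<Rightarrow> 'a) \<Rightarrow> nat \<Rightarrow> nat \<Rightarrow> 'a list" where
  "Lst \<omega> j s = map (\<lambda>k. \<omega> (j, k)) [0..<s]"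

lemma obs_snoc: "obs (h @ [(a, v)]) j = obs h j @ (if a = j then [v] else [])"
  by (simp add: obs_def)

lemma length_run: "length (run ch \<omega> \<tau>) = \<tau>"
  by (induction \<tau>) (simp_all add: Let_def)

lemma plays_Suc: "plays ch \<omega> (Suc \<tau>) j = plays ch \<omega> \<tau> j + (if ch (Suc \<tau>) (run ch \<omega> \<tau>) = j then 1 else 0)"
  by (simp add: plays_def Let_def obs_snoc)

lemma plays_le: "plays ch \<omega> \<tau> j \<le> \<tau>"
proof -
  have "plays ch \<omega> \<tau> j \<le> length (run ch \<omega> \<tau>)"
    unfolding plays_def obs_def by simp
  then show ?thesis by (simp add: length_run)
qed

lemma length_Lst [simp]: "length (Lst \<omega> j s) = s"
  by (simp add: Lst_def)

lemma obs_run: "obs (run ch \<omega> \<tau>) j = Lst \<omega> j (plays ch \<omega> \<tau> j)"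
proof (induction \<tau>)
  case 0 then show ?case by (simp add: obs_def Lst_def plays_def)
next
  case (Suc \<tau>)
  define h where "h = run ch \<omega> \<tau>"
  define a where "a = ch (Suc \<tau>) h"
  have r: "run ch \<omega> (Suc \<tau>) = h @ [(a, \<omega> (a, length (obs h a)))]"
    by (simp only: run.simps Let_def h_def a_def)
  have IH: "obs h j = Lst \<omega> j (plays ch \<omega> \<tau> j)" using Suc.IH by (simp only: h_def)
  have pl: "plays ch \<omega> \<tau> j = length (obs h j)" by (simp only: plays_def h_def)
  have ps: "plays ch \<omega> (Suc \<tau>) j = plays ch \<omega> \<tau> j + (if a = j then 1 else 0)"
    by (simp only: plays_Suc h_def a_def)
  show ?case
  proof (cases "a = j")
    case True
    have "obs (run ch \<omega> (Suc \<tau>)) j = obs h j @ [\<omega> (j, length (obs h j))]"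
      using True by (simp only: r obs_snoc) simp
    also have "\<dots> = Lst \<omega> j (plays ch \<omega> \<tau> j) @ [\<omega> (j, plays ch \<omega> \<tau> j)]"
      by (simp only: IH length_Lst)
    also have "\<dots> = Lst \<omega> j (Suc (plays ch \<omega> \<tau> j))" by (simp add: Lst_def)
    also have "Suc (plays ch \<omega> \<tau> j) = plays ch \<omega> (Suc \<tau>) j"
      using True ps by simp
    finally show ?thesis .
  next
    case False
    have "obs (run ch \<omega> (Suc \<tau>)) j = obs h j"
      using False by (simp only: r obs_snoc) simp
    also have "\<dots> = Lst \<omega> j (plays ch \<omega> (Suc \<tau>) j)"
      using False ps IH by simp
    finally show ?thesis .
  qed
qed

lemma count_bound:
  fixes u :: nat
  shows "plays ch \<omega> t i \<le> u + (\<Sum>\<tau>\<in>{1..t}. if ch \<tau> (run ch \<omega> (\<tau> - 1)) = i \<and> u \<le> plays ch \<omega> (\<tau> - 1) i then 1 else 0)"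
proof (induction t)
  case 0 then show ?case by (simp add: plays_def obs_def)
next
  case (Suc t)
  have sum: "(\<Sum>\<tau>\<in>{1..Suc t}. if ch \<tau> (run ch \<omega> (\<tau> - 1)) = i \<and> u \<le> plays ch \<omega> (\<tau> - 1) i then 1 else 0)
     = (\<Sum>\<tau>\<in>{1..t}. if ch \<tau> (run ch \<omega> (\<tau> - 1)) = i \<and> u \<le> plays ch \<omega> (\<tau> - 1) i then 1 else 0)
       + (if ch (Suc t) (run ch \<omega> t) = i \<and> u \<le> plays ch \<omega> t i then 1 else (0::nat))"
    by (subst sum.cl_ivl_Suc) simp
  show ?case using Suc unfolding sum plays_Suc by auto
qed


definition idx :: "(nat \<Rightarrow> 'a set) \<Rightarrow> real \<Rightarrow> nat \<Rightarrow> nat \<Rightarrow> 'a list \<Rightarrow> real" where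
  "idx X \<alpha> j \<tau> xs = plugin_H xs + ucd (card (X j)) xs (delta_conf \<alpha> \<tau>)"

lemma key_round:
  fixes ch :: "nat \<Rightarrow> (nat \<times> 'a) list \<Rightarrow> nat"
  assumes ch_arg: "\<And>s h. ch s h \<in> ucb_argmax K X \<alpha> s h"
    and isK: "is < K" and \<tau>: "1 \<le> \<tau>"
    and chi: "ch \<tau> (run ch \<omega> (\<tau> - 1)) = i" and u: "1 \<le> u" "u \<le> plays ch \<omega> (\<tau> - 1) i"
  shows "\<exists>s\<in>{1..<\<tau>}. idx X \<alpha> is \<tau> (Lst \<omega> is s) < Hs \<or>
            (u \<le> s \<and> Hs \<le> idx X \<alpha> i \<tau> (Lst \<omega> i s))"
proof -
  define h where "h = run ch \<omega> (\<tau> - 1)"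
  define Ni where "Ni = plays ch \<omega> (\<tau> - 1) i"
  define Ns where "Ns = plays ch \<omega> (\<tau> - 1) is"
  have obi: "obs h i = Lst \<omega> i Ni" by (simp add: h_def Ni_def obs_run)
  have obs: "obs h is = Lst \<omega> is Ns" by (simp add: h_def Ns_def obs_run)
  have Ni1: "1 \<le> Ni" using u by (simp add: Ni_def)
  have Nile: "Ni \<le> \<tau> - 1" unfolding Ni_def by (rule plays_le)
  have Nsle: "Ns \<le> \<tau> - 1" unfolding Ns_def by (rule plays_le)
  have "ch \<tau> h \<in> ucb_argmax K X \<alpha> \<tau> h" by (rule ch_arg)
  then have le: "ucb_index X \<alpha> \<tau> h is \<le> ucb_index X \<alpha> \<tau> h i"
    using isK chi by (simp add: ucb_argmax_def h_def)
  have idxi: "ucb_index X \<alpha> \<tau> h i = ereal (idx X \<alpha> i \<tau> (Lst \<omega> i Ni))"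
    using Ni1 by (simp add: ucb_index_def obi idx_def Lst_def)
  have Ns1: "1 \<le> Ns"
  proof (rule ccontr)
    assume "\<not> 1 \<le> Ns"
    then have "Ns = 0" by simp
    then have "ucb_index X \<alpha> \<tau> h is = \<infinity>" by (simp add: ucb_index_def obs Lst_def)
    then show False using le idxi by simp
  qed
  have idxs: "ucb_index X \<alpha> \<tau> h is = ereal (idx X \<alpha> is \<tau> (Lst \<omega> is Ns))"
    using Ns1 by (simp add: ucb_index_def obs idx_def Lst_def)
  have vle: "idx X \<alpha> is \<tau> (Lst \<omega> is Ns) \<le> idx X \<alpha> i \<tau> (Lst \<omega> i Ni)"
    using le idxi idxs by simp
  show ?thesis
  proof (cases "idx X \<alpha> is \<tau> (Lst \<omega> is Ns) < Hs")
    case True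
    have "Ns \<in> {1..<\<tau>}" using Ns1 Nsle \<tau> by auto
    then show ?thesis using True by blast
  next
    case False
    have "Ni \<in> {1..<\<tau>}" using Ni1 Nile \<tau> by auto
    moreover have "u \<le> Ni" using u by (simp add: Ni_def)
    ultimately show ?thesis using False vle by force
  qed
qed

lemma delta_conf_bounds:
  assumes "1 \<le> \<tau>" "\<alpha> > 0"
  shows "0 < delta_conf \<alpha> \<tau>" "delta_conf \<alpha> \<tau> \<le> 1"
    "ln (2 / delta_conf \<alpha> \<tau>) = ln (2 * real \<tau> powr \<alpha>)"
proof -
  have t: "real \<tau> \<ge> 1" using assms by simp
  show "0 < delta_conf \<alpha> \<tau>" using t by (simp add: delta_conf_def)
  have "real \<tau> powr \<alpha> \<ge> 1" using t assms by (intro ge_one_powr_ge_zero) auto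
  then have "real \<tau> powr (- \<alpha>) \<le> 1" by (simp add: powr_minus inverse_le_1_iff)
  then show "delta_conf \<alpha> \<tau> \<le> 1" by (simp add: delta_conf_def)
  show "ln (2 / delta_conf \<alpha> \<tau>) = ln (2 * real \<tau> powr \<alpha>)"
    using t by (simp add: delta_conf_def powr_minus divide_inverse)
qed

lemma hypB:
  fixes Y :: "'a set"
  assumes m: "1 \<le> card Y" and a: "\<alpha> > 2" and b: "0 < \<beta>" "\<beta> < 1" and D: "\<Delta> > 0"
    and \<tau>: "1 \<le> \<tau>" "\<tau> \<le> t" and s: "1 \<le> s" and G: "Gamma_bias \<alpha> \<beta> Y \<Delta> t \<le> real s"
  shows "ln (1 + (real (card Y) - 1) / real s) + 2 * dev s (delta_conf \<alpha> \<tau>) < \<Delta>"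
proof -
  define e1 where "e1 = exp (\<beta> * \<Delta> / 2) - 1"
  have e1: "e1 > 0" using b D by (simp add: e1_def)
  define Lt where "Lt = ln (2 * real t powr \<alpha>)"
  define S where "S = 8 * Lt / ((1 - \<beta>)\<^sup>2 * \<Delta>\<^sup>2)"
  have g1: "(real (card Y) - 1) / e1 \<le> real s" using G by (simp add: Gamma_bias_def e1_def)
  have g2: "15 * Lambda 2 S \<le> real s" using G by (simp add: Gamma_bias_def S_def Lt_def)
  have sp: "real s > 0" using s by simp
  have "real (card Y) - 1 \<le> real s * e1" using g1 e1 by (simp add: divide_le_eq mult.commute)
  then have "(real (card Y) - 1) / real s \<le> e1" using sp by (simp add: divide_le_eq mult.commute)
  then have "1 + (real (card Y) - 1) / real s \<le> exp (\<beta> * \<Delta> / 2)" by (simp add: e1_def)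
  moreover have "0 < 1 + (real (card Y) - 1) / real s" using m sp by (simp add: add_pos_nonneg)
  ultimately have bias: "ln (1 + (real (card Y) - 1) / real s) \<le> \<beta> * \<Delta> / 2"
    by (metis ln_exp ln_le_cancel_iff exp_gt_zero)
  have t1: "real t \<ge> 1" using \<tau> by simp
  have tp: "real t powr \<alpha> \<ge> 1" using t1 a by (intro ge_one_powr_ge_zero) auto
  have Lt: "Lt > 0" unfolding Lt_def using tp by (intro ln_gt_zero) simp
  have eqL: "ln (2 / delta_conf \<alpha> \<tau>) = ln (2 * real \<tau> powr \<alpha>)"
    using delta_conf_bounds(3)[OF \<tau>(1)] a by simp
  have pm: "real \<tau> powr \<alpha> \<le> real t powr \<alpha>" using \<tau> a by (intro powr_mono2) auto
  have p1: "real \<tau> powr \<alpha> \<ge> 1" using \<tau> a by (intro ge_one_powr_ge_zero) auto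
  have "ln (2 * real \<tau> powr \<alpha>) \<le> ln (2 * real t powr \<alpha>)"
    by (rule ln_mono) (use pm p1 \<tau> in auto)
  moreover have "0 < ln (2 * real \<tau> powr \<alpha>)" by (rule ln_gt_zero) (use p1 in auto)
  ultimately have Lt\<tau>: "ln (2 / delta_conf \<alpha> \<tau>) \<le> Lt" "0 < ln (2 / delta_conf \<alpha> \<tau>)"
    unfolding Lt_def eqL by auto
  have Sp: "S > 0" using Lt b D unfolding S_def by (intro divide_pos_pos mult_pos_pos) auto
  have "S * (ln (real s))\<^sup>2 \<le> real s"
    using key_numeric[OF Sp, of "real s"] s g2 by (simp add: Lambda_def)
  then have lq: "(ln (real s))\<^sup>2 / real s \<le> 1 / S" using sp Sp by (simp add: field_simps)
  define L\<tau> where "L\<tau> = ln (2 / delta_conf \<alpha> \<tau>)"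
  have "2 * (ln (real s))\<^sup>2 / real s * L\<tau> \<le> 2 * (1 / S) * Lt"
    using lq Lt\<tau> Sp unfolding L\<tau>_def by (intro mult_mono) auto
  also have "\<dots> = ((1 - \<beta>) * \<Delta> / 2)\<^sup>2"
    using Lt b D by (simp add: S_def field_simps power2_eq_square)
  finally have dsq: "2 * (ln (real s))\<^sup>2 / real s * L\<tau> \<le> ((1 - \<beta>) * \<Delta> / 2)\<^sup>2" .
  have "dev s (delta_conf \<alpha> \<tau>) \<le> sqrt (((1 - \<beta>) * \<Delta> / 2)\<^sup>2)"
    unfolding dev_def using dsq unfolding L\<tau>_def by (rule real_sqrt_le_mono)
  also have "\<dots> = (1 - \<beta>) * \<Delta> / 2" using b D by simp
  finally have dev: "dev s (delta_conf \<alpha> \<tau>) \<le> (1 - \<beta>) * \<Delta> / 2" .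
  have "ln (1 + (real (card Y) - 1) / real s) + 2 * dev s (delta_conf \<alpha> \<tau>) \<le> \<beta> * \<Delta> / 2 + (1 - \<beta>) * \<Delta>"
    using bias dev by simp
  also have "\<dots> < \<Delta>" using b D by (simp add: algebra_simps)
  finally show ?thesis .
qed



lemma arm_bound:
  fixes K :: nat and X :: "nat \<Rightarrow> 'a set" and p :: "nat \<Rightarrow> 'a pmf"
    and \<alpha> \<beta> :: real and ch :: "nat \<Rightarrow> (nat \<times> 'a) list \<Rightarrow> nat" and t :: nat
    and i "is" :: nat and \<Delta> :: real
  assumes ch_arg: "\<And>s h. ch s h \<in> ucb_argmax K X \<alpha> s h"
    and isK: "is < K"
    and fin_is: "finite (X is)" and sub_is: "set_pmf (p is) \<subseteq> X is"
    and fin_i: "finite (X i)" and sub_i: "set_pmf (p i) \<subseteq> X i"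
    and a: "\<alpha> > 2" and b: "0 < \<beta>" "\<beta> < 1" and t: "t \<ge> 1"
    and D: "\<Delta> = pmf_entropy (p is) - pmf_entropy (p i)" "\<Delta> > 0"
  shows "(\<integral>\<omega>. real (plays ch \<omega> t i) \<partial>imab_space p)
           \<le> Gamma_bias \<alpha> \<beta> (X i) \<Delta> t + 2 * (\<alpha> - 1) / (\<alpha> - 2)"
proof -
  interpret P: prob_space "imab_space p" by (rule prob_space_imab)
  define Hs where "Hs = pmf_entropy (p is)"
  define \<Gamma> where "\<Gamma> = Gamma_bias \<alpha> \<beta> (X i) \<Delta> t"
  have finp_is: "finite (set_pmf (p is))" using fin_is sub_is finite_subset by blast
  have finp_i: "finite (set_pmf (p i))" using fin_i sub_i finite_subset by blast
  have cardY: "1 \<le> card (X i)"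
  proof -
    have "X i \<noteq> {}" using sub_i set_pmf_not_empty[of "p i"] by blast
    then show ?thesis using fin_i by (simp add: Suc_le_eq card_gt_0_iff)
  qed
  have \<Gamma>0: "0 \<le> \<Gamma>"
  proof -
    have "0 \<le> (real (card (X i)) - 1) / (exp (\<beta> * \<Delta> / 2) - 1)"
      using cardY b D by (intro divide_nonneg_pos) auto
    then show ?thesis unfolding \<Gamma>_def Gamma_bias_def by linarith
  qed
  define u where "u = max 1 (nat \<lceil>\<Gamma>\<rceil>)"
  have u1: "1 \<le> u" by (simp add: u_def)
  have uG: "\<Gamma> \<le> real u"
  proof -
    have "\<Gamma> \<le> real (nat \<lceil>\<Gamma>\<rceil>)" using \<Gamma>0 by linarith
    also have "\<dots> \<le> real u" by (simp add: u_def)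
    finally show ?thesis .
  qed
  have uG2: "real u \<le> \<Gamma> + 1"
  proof (cases "1 \<le> nat \<lceil>\<Gamma>\<rceil>")
    case True
    then have "real u = real (nat \<lceil>\<Gamma>\<rceil>)" by (simp add: u_def max_def)
    also have "\<dots> \<le> \<Gamma> + 1" using \<Gamma>0 by linarith
    finally show ?thesis .
  next
    case False
    then show ?thesis using \<Gamma>0 by (simp add: u_def max_def)
  qed
  define \<delta> where "\<delta> \<tau> = delta_conf \<alpha> \<tau>" for \<tau>
  define EA where "EA \<tau> = {xs. idx X \<alpha> is \<tau> xs < Hs}" for \<tau>
  define EB where "EB \<tau> s = {xs. u \<le> s \<and> Hs \<le> idx X \<alpha> i \<tau> xs}" for \<tau> s
  have exA: "\<forall>\<tau>. \<exists>f. \<forall>s. f s \<in> sets (imab_space p) \<and>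
      measure (imab_space p) (f s) \<le> measure_pmf.prob (iid (p is) s) (EA \<tau>) \<and>
      {\<omega>. Lst \<omega> is s \<in> EA \<tau>} \<subseteq> f s"
  proof
    fix \<tau>
    have "\<forall>s. \<exists>T. T \<in> sets (imab_space p) \<and>
      measure (imab_space p) T \<le> measure_pmf.prob (iid (p is) s) (EA \<tau>) \<and>
      {\<omega>. Lst \<omega> is s \<in> EA \<tau>} \<subseteq> T"
      using bridge[of p "is", OF finp_is] unfolding Lst_def by blast
    then show "\<exists>f. \<forall>s. f s \<in> sets (imab_space p) \<and>
      measure (imab_space p) (f s) \<le> measure_pmf.prob (iid (p is) s) (EA \<tau>) \<and>
      {\<omega>. Lst \<omega> is s \<in> EA \<tau>} \<subseteq> f s" by (rule choice)
  qed
  then obtain TA where TA: "\<And>\<tau> s. TA \<tau> s \<in> sets (imab_space p)"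
      "\<And>\<tau> s. measure (imab_space p) (TA \<tau> s) \<le> measure_pmf.prob (iid (p is) s) (EA \<tau>)"
      "\<And>\<tau> s. {\<omega>. Lst \<omega> is s \<in> EA \<tau>} \<subseteq> TA \<tau> s"
    by (metis choice)
  have exB: "\<forall>\<tau>. \<exists>f. \<forall>s. f s \<in> sets (imab_space p) \<and>
      measure (imab_space p) (f s) \<le> measure_pmf.prob (iid (p i) s) (EB \<tau> s) \<and>
      {\<omega>. Lst \<omega> i s \<in> EB \<tau> s} \<subseteq> f s"
  proof
    fix \<tau>
    have "\<forall>s. \<exists>T. T \<in> sets (imab_space p) \<and>
      measure (imab_space p) T \<le> measure_pmf.prob (iid (p i) s) (EB \<tau> s) \<and>
      {\<omega>. Lst \<omega> i s \<in> EB \<tau> s} \<subseteq> T"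
      using bridge[of p i, OF finp_i] unfolding Lst_def by blast
    then show "\<exists>f. \<forall>s. f s \<in> sets (imab_space p) \<and>
      measure (imab_space p) (f s) \<le> measure_pmf.prob (iid (p i) s) (EB \<tau> s) \<and>
      {\<omega>. Lst \<omega> i s \<in> EB \<tau> s} \<subseteq> f s" by (rule choice)
  qed
  then obtain TB where TB: "\<And>\<tau> s. TB \<tau> s \<in> sets (imab_space p)"
      "\<And>\<tau> s. measure (imab_space p) (TB \<tau> s) \<le> measure_pmf.prob (iid (p i) s) (EB \<tau> s)"
      "\<And>\<tau> s. {\<omega>. Lst \<omega> i s \<in> EB \<tau> s} \<subseteq> TB \<tau> s"
    by (metis choice)
  have hA: "measure (imab_space p) (TA \<tau> s) \<le> \<delta> \<tau> / 2" if "1 \<le> \<tau>" "1 \<le> s" for \<tau> s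
  proof -
    have "measure (imab_space p) (TA \<tau> s) \<le> measure_pmf.prob (iid (p is) s) (EA \<tau>)" by (rule TA(2))
    also have "EA \<tau> = {xs. plugin_H xs + ucd (card (X is)) xs (\<delta> \<tau>) < pmf_entropy (p is)}"
      by (simp add: EA_def idx_def \<delta>_def Hs_def)
    also have "measure_pmf.prob (iid (p is) s) \<dots> \<le> \<delta> \<tau> / 2"
      using delta_conf_bounds[OF that(1), of \<alpha>] a
      by (intro probA[OF finp_is _ that(2)]) (auto simp: \<delta>_def card_mono[OF fin_is sub_is])
    finally show ?thesis .
  qed
  have hB: "measure (imab_space p) (TB \<tau> s) \<le> \<delta> \<tau> / 2" if "1 \<le> \<tau>" "\<tau> \<le> t" "1 \<le> s" for \<tau> s
  proof -
    have d: "0 < \<delta> \<tau>" "\<delta> \<tau> \<le> 1" using delta_conf_bounds[OF that(1), of \<alpha>] a by (auto simp: \<delta>_def)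
    have "measure (imab_space p) (TB \<tau> s) \<le> measure_pmf.prob (iid (p i) s) (EB \<tau> s)" by (rule TB(2))
    also have "\<dots> \<le> \<delta> \<tau> / 2"
    proof (cases "u \<le> s")
      case True
      have eq: "EB \<tau> s = {xs. Hs \<le> plugin_H xs + ucd (card (X i)) xs (\<delta> \<tau>)}"
        using True by (simp add: EB_def idx_def \<delta>_def)
      have hyp: "ln (1 + (real (card (X i)) - 1) / real s) + 2 * dev s (\<delta> \<tau>) < Hs - pmf_entropy (p i)"
        unfolding \<delta>_def Hs_def D(1)[symmetric]
        by (rule hypB[OF cardY a b D(2) that(1,2,3)]) (use uG True in \<open>auto simp: \<Gamma>_def\<close>)
      show ?thesis unfolding eq by (rule probB[OF finp_i that(3) d hyp])
    next
      case False
      then have "EB \<tau> s = {}" by (simp add: EB_def)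
      then show ?thesis using d by simp
    qed
    finally show ?thesis .
  qed
  define g where "g \<omega> = real u + (\<Sum>\<tau>\<in>{1..t}. \<Sum>s\<in>{1..<\<tau>}. indicator (TA \<tau> s) \<omega> + indicator (TB \<tau> s) \<omega>)" for \<omega>
  have pw: "real (plays ch \<omega> t i) \<le> g \<omega>" for \<omega>
  proof -
    define bad where "bad \<tau> \<longleftrightarrow> ch \<tau> (run ch \<omega> (\<tau> - 1)) = i \<and> u \<le> plays ch \<omega> (\<tau> - 1) i" for \<tau>
    have "plays ch \<omega> t i \<le> u + (\<Sum>\<tau>\<in>{1..t}. if bad \<tau> then 1 else 0)"
      unfolding bad_def by (rule count_bound)
    then have "real (plays ch \<omega> t i) \<le> real (u + (\<Sum>\<tau>\<in>{1..t}. if bad \<tau> then 1 else 0))"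
      by (rule of_nat_mono)
    also have "real (u + (\<Sum>\<tau>\<in>{1..t}. if bad \<tau> then 1 else 0)) = real u + (\<Sum>\<tau>\<in>{1..t}. if bad \<tau> then 1 else (0::real))"
      by (simp add: of_nat_sum) (intro sum.cong refl, simp)
    also have "(\<Sum>\<tau>\<in>{1..t}. if bad \<tau> then 1 else (0::real))
        \<le> (\<Sum>\<tau>\<in>{1..t}. \<Sum>s\<in>{1..<\<tau>}. indicator (TA \<tau> s) \<omega> + indicator (TB \<tau> s) \<omega>)"
    proof (rule sum_mono)
      fix \<tau> assume \<tau>: "\<tau> \<in> {1..t}"
      show "(if bad \<tau> then 1 else (0::real)) \<le> (\<Sum>s\<in>{1..<\<tau>}. indicator (TA \<tau> s) \<omega> + indicator (TB \<tau> s) \<omega>)"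
      proof (cases "bad \<tau>")
        case True
        then obtain s where s: "s \<in> {1..<\<tau>}" and AB: "idx X \<alpha> is \<tau> (Lst \<omega> is s) < Hs \<or>
            (u \<le> s \<and> Hs \<le> idx X \<alpha> i \<tau> (Lst \<omega> i s))"
          using key_round[OF ch_arg isK _ _ u1, of \<tau> \<omega> i Hs] \<tau> unfolding bad_def by auto
        have "(1::real) \<le> indicator (TA \<tau> s) \<omega> + indicator (TB \<tau> s) \<omega>"
        proof (cases "idx X \<alpha> is \<tau> (Lst \<omega> is s) < Hs")
          case True
          then have "\<omega> \<in> TA \<tau> s" using TA(3)[of s \<tau>] by (auto simp: EA_def)
          then show ?thesis by (simp add: indicator_def)
        next
          case False
          then have "\<omega> \<in> TB \<tau> s" using AB TB(3)[of s \<tau>] by (auto simp: EB_def)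
          then show ?thesis by (simp add: indicator_def)
        qed
        also have "\<dots> \<le> (\<Sum>s\<in>{1..<\<tau>}. indicator (TA \<tau> s) \<omega> + indicator (TB \<tau> s) \<omega>)"
          using s by (intro member_le_sum) auto
        finally show ?thesis using True by simp
      next
        case False
        then show ?thesis by (simp add: sum_nonneg)
      qed
    qed
    finally show ?thesis unfolding g_def by simp
  qed
  have intg: "integrable (imab_space p) g"
    unfolding g_def
    by (intro Bochner_Integration.integrable_add Bochner_Integration.integrable_sum integrable_real_indicator)
       (auto simp: TA(1) TB(1) less_top[symmetric])
  have "(\<integral>\<omega>. g \<omega> \<partial>imab_space p) = real u + (\<Sum>\<tau>\<in>{1..t}. \<Sum>s\<in>{1..<\<tau>}.
          measure (imab_space p) (TA \<tau> s) + measure (imab_space p) (TB \<tau> s))"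
  proof -
    have iA: "integrable (imab_space p) (indicator (TA \<tau> s) :: _ \<Rightarrow> real)" for \<tau> s
      by (intro integrable_real_indicator) (auto simp: TA(1) less_top[symmetric])
    have iB: "integrable (imab_space p) (indicator (TB \<tau> s) :: _ \<Rightarrow> real)" for \<tau> s
      by (intro integrable_real_indicator) (auto simp: TB(1) less_top[symmetric])
    have iS: "integrable (imab_space p) (\<lambda>\<omega>. \<Sum>\<tau>\<in>{1..t}. \<Sum>s\<in>{1..<\<tau>}. indicator (TA \<tau> s) \<omega> + indicator (TB \<tau> s) \<omega> :: real)"
      apply (rule Bochner_Integration.integrable_sum)
      apply (rule Bochner_Integration.integrable_sum)
      apply (rule Bochner_Integration.integrable_add)
      apply (rule iA)
      apply (rule iB)
      done
    have "(\<integral>\<omega>. g \<omega> \<partial>imab_space p) = real u + (\<integral>\<omega>. (\<Sum>\<tau>\<in>{1..t}. \<Sum>s\<in>{1..<\<tau>}. indicator (TA \<tau> s) \<omega> + indicator (TB \<tau> s) \<omega> :: real) \<partial>imab_space p)"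
      unfolding g_def by (subst Bochner_Integration.integral_add) (use iS in \<open>auto simp: P.prob_space\<close>)
    also have "(\<integral>\<omega>. (\<Sum>\<tau>\<in>{1..t}. \<Sum>s\<in>{1..<\<tau>}. indicator (TA \<tau> s) \<omega> + indicator (TB \<tau> s) \<omega> :: real) \<partial>imab_space p)
        = (\<Sum>\<tau>\<in>{1..t}. \<Sum>s\<in>{1..<\<tau>}. (\<integral>\<omega>. indicator (TA \<tau> s) \<omega> \<partial>imab_space p) + (\<integral>\<omega>. indicator (TB \<tau> s) \<omega> \<partial>imab_space p))"
      by (simp add: Bochner_Integration.integral_sum Bochner_Integration.integrable_sum
          Bochner_Integration.integral_add iA iB)
    also have "\<dots> = (\<Sum>\<tau>\<in>{1..t}. \<Sum>s\<in>{1..<\<tau>}. measure (imab_space p) (TA \<tau> s) + measure (imab_space p) (TB \<tau> s))"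
      by (simp add: space_imab)
    finally show ?thesis .
  qed
  also have "\<dots> \<le> real u + (\<Sum>\<tau>\<in>{1..t}. \<Sum>s\<in>{1..<\<tau>}. \<delta> \<tau> / 2 + \<delta> \<tau> / 2)"
    using hA hB by (intro add_left_mono sum_mono add_mono) auto
  also have "\<dots> = real u + (\<Sum>\<tau>\<in>{1..t}. real (\<tau> - 1) * real \<tau> powr (- \<alpha>))"
    by (simp add: \<delta>_def delta_conf_def)
  also have "\<dots> \<le> (\<Gamma> + 1) + 1 / (\<alpha> - 2)"
    using uG2 sum_bound[OF a, of t] by linarith
  also have "\<dots> \<le> \<Gamma> + 2 * (\<alpha> - 1) / (\<alpha> - 2)"
  proof -
    have "1 + 1 / (\<alpha> - 2) = (\<alpha> - 1) / (\<alpha> - 2)" using a by (simp add: field_simps)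
    moreover have "(\<alpha> - 1) / (\<alpha> - 2) \<ge> 0" using a by simp
    moreover have "2 * (\<alpha> - 1) / (\<alpha> - 2) = 2 * ((\<alpha> - 1) / (\<alpha> - 2))" by simp
    ultimately show ?thesis by linarith
  qed
  finally have gbound: "(\<integral>\<omega>. g \<omega> \<partial>imab_space p) \<le> \<Gamma> + 2 * (\<alpha> - 1) / (\<alpha> - 2)" .
  show ?thesis
  proof (cases "integrable (imab_space p) (\<lambda>\<omega>. real (plays ch \<omega> t i))")
    case True
    have "(\<integral>\<omega>. real (plays ch \<omega> t i) \<partial>imab_space p) \<le> (\<integral>\<omega>. g \<omega> \<partial>imab_space p)"
      by (rule integral_mono[OF True intg pw])
    then show ?thesis using gbound by (simp add: \<Gamma>_def)
  next
    case False
    then have "(\<integral>\<omega>. real (plays ch \<omega> t i) \<partial>imab_space p) = 0"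
      by (rule not_integrable_integral_eq)
    moreover have "0 \<le> \<Gamma> + 2 * (\<alpha> - 1) / (\<alpha> - 2)" using \<Gamma>0 a by simp
    ultimately show ?thesis by (simp add: \<Gamma>_def)
  qed
qed


theorem theorem1:
  fixes K :: nat and X :: "nat \<Rightarrow> 'a set" and p :: "nat \<Rightarrow> 'a pmf"
    and \<alpha> \<beta> :: real and ch :: "nat \<Rightarrow> (nat \<times> 'a) list \<Rightarrow> nat" and t :: nat
  assumes "K \<ge> 2"
    and "\<And>i. i < K \<Longrightarrow> finite (X i)"
    and "\<And>i. i < K \<Longrightarrow> set_pmf (p i) \<subseteq> X i"
    and "\<alpha> > 2"
    and "0 < \<beta>" and "\<beta> < 1"
    and "\<And>s h. ch s h \<in> ucb_argmax K X \<alpha> s h"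
    and "t \<ge> 1"
  shows "pseudo_regret K p ch t \<le>
    (\<Sum>i\<in>{i. i < K \<and> gap K p i > 0}.
       Gamma_bias \<alpha> \<beta> (X i) (gap K p i) t * gap K p i + 2 * (\<alpha> - 1) / (\<alpha> - 2) * gap K p i)"
proof -
  note K = assms(1) and finX = assms(2) and subX = assms(3) and a = assms(4) and b = assms(5,6)
    and ch_arg = assms(7) and t = assms(8)
  have "max_entropy K p \<in> (\<lambda>i. pmf_entropy (p i)) ` {..<K}"
  proof -
    have "0 \<in> {..<K}" using K by simp
    then show ?thesis unfolding max_entropy_def by (intro Max_in) auto
  qed
  then obtain "is" where isK: "is < K" and isH: "pmf_entropy (p is) = max_entropy K p" by auto
  show ?thesis
    unfolding pseudo_regret_def
  proof (rule sum_mono)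
    fix i assume i: "i \<in> {i. i < K \<and> gap K p i > 0}"
    then have iK: "i < K" and gp: "gap K p i > 0" by auto
    have D: "gap K p i = pmf_entropy (p is) - pmf_entropy (p i)" by (simp add: gap_def isH)
    have "(\<integral>\<omega>. real (plays ch \<omega> t i) \<partial>imab_space p)
        \<le> Gamma_bias \<alpha> \<beta> (X i) (gap K p i) t + 2 * (\<alpha> - 1) / (\<alpha> - 2)"
      by (rule arm_bound[OF ch_arg isK finX[OF isK] subX[OF isK] finX[OF iK] subX[OF iK] a b t D gp])
    then have "(\<integral>\<omega>. real (plays ch \<omega> t i) \<partial>imab_space p) * gap K p i
        \<le> (Gamma_bias \<alpha> \<beta> (X i) (gap K p i) t + 2 * (\<alpha> - 1) / (\<alpha> - 2)) * gap K p i"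
      using gp by (intro mult_right_mono) auto
    then show "(\<integral>\<omega>. real (plays ch \<omega> t i) \<partial>imab_space p) * gap K p i
        \<le> Gamma_bias \<alpha> \<beta> (X i) (gap K p i) t * gap K p i + 2 * (\<alpha> - 1) / (\<alpha> - 2) * gap K p i"
      by (simp add: distrib_right)
  qed
qed


end
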